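(* Let $L$ be a complete enriched graded Lie algebra such that $\dim(L/L^{(2)})_p<\infty$ for every $p$. Then (i) for every $p$ and every integer $k$ there is an index $\alpha$ such that the projection $(L/L^{(k)})_p\to(L_\alpha/L_\alpha^k)_p$ is an isomorphism; (ii) $L^k=L^{(k)}$ for all $k\ge1$, and so $L$ is pronilpotent.
   Context: A complete enriched Lie algebra is a graded Lie algebra $L=L_{\ge0}$ over $\mathbb Q$ with a directed family (under inclusion of kernels) of surjective morphisms $\rho_\alpha:L\to L_\alpha$ onto finite-dimensional nilpotent Lie algebras, $\bigcap\ker\rho_\alpha=0$, and $L\cong\varprojlim_\alpha L_\alpha$. $L^k$ is the span of iterated brackets of length $k$ (lower central series), and $L^{(k)}$ is the closure of $L^k$, i.e. $\varprojlim_\alpha\rho_\alpha(L^k)$. $L$ is pronilpotent if $L\to\varprojlim_nL/L^n$ is an isomorphism. *)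

theory Defs
  imports Complex_Main "HOL-Library.FuncSet"
begin

text \<open>A graded Lie algebra over the rationals, concentrated in degrees p \<ge> 0.
  The ambient type is a Q-vector space (scalar multiplication lsc); the Lie algebra
  itself is the span of the homogeneous components lgr p, whose sum is required to be
  direct.  lbr is the bracket.\<close>

record 'a glie =
  lsc :: "rat \<Rightarrow> 'a \<Rightarrow> 'a"
  lbr :: "'a \<Rightarrow> 'a \<Rightarrow> 'a"
  lgr :: "nat \<Rightarrow> 'a set"

definition car :: "('a::ab_group_add, 'm) glie_scheme \<Rightarrow> 'a set" where
  "car L = module.span (lsc L) (\<Union>p. lgr L p)"

definition graded_lie :: "('a::ab_group_add, 'm) glie_scheme \<Rightarrow> bool" where
  "graded_lie L \<longleftrightarrow>
     vector_space (lsc L) \<and>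
     (\<forall>p. module.subspace (lsc L) (lgr L p)) \<and>
     (\<forall>n (x::nat \<Rightarrow> 'a). (\<forall>p<n. x p \<in> lgr L p) \<and> (\<Sum>p<n. x p) = 0 \<longrightarrow> (\<forall>p<n. x p = 0)) \<and>
     (\<forall>x\<in>car L. \<forall>y\<in>car L. \<forall>z\<in>car L. \<forall>c.
        lbr L x y \<in> car L \<and>
        lbr L (x + y) z = lbr L x z + lbr L y z \<and>
        lbr L x (y + z) = lbr L x y + lbr L x z \<and>
        lbr L (lsc L c x) y = lsc L c (lbr L x y) \<and>
        lbr L x (lsc L c y) = lsc L c (lbr L x y)) \<and>
     (\<forall>p q. \<forall>x\<in>lgr L p. \<forall>y\<in>lgr L q. lbr L x y \<in> lgr L (p + q)) \<and>
     (\<forall>p q. \<forall>x\<in>lgr L p. \<forall>y\<in>lgr L q.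
        lbr L x y = - lsc L ((- 1) ^ (p * q)) (lbr L y x)) \<and>
     (\<forall>p q r. \<forall>x\<in>lgr L p. \<forall>y\<in>lgr L q. \<forall>z\<in>lgr L r.
        lbr L x (lbr L y z) = lbr L (lbr L x y) z + lsc L ((- 1) ^ (p * q)) (lbr L y (lbr L x z)))"

definition lie_hom :: "('a::ab_group_add, 'm) glie_scheme \<Rightarrow> ('b::ab_group_add, 'n) glie_scheme \<Rightarrow> ('a \<Rightarrow> 'b) \<Rightarrow> bool" where
  "lie_hom L M f \<longleftrightarrow>
     f ` car L \<subseteq> car M \<and>
     (\<forall>x\<in>car L. \<forall>y\<in>car L. f (x + y) = f x + f y \<and> f (lbr L x y) = lbr M (f x) (f y)) \<and>
     (\<forall>c. \<forall>x\<in>car L. f (lsc L c x) = lsc M c (f x)) \<and>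
     (\<forall>p. f ` lgr L p \<subseteq> lgr M p)"

definition hom_ker :: "('a::ab_group_add, 'm) glie_scheme \<Rightarrow> ('a \<Rightarrow> 'b::zero) \<Rightarrow> 'a set" where
  "hom_ker L f = {x \<in> car L. f x = 0}"

fun ibr :: "('a::ab_group_add, 'm) glie_scheme \<Rightarrow> nat \<Rightarrow> 'a set" where
  "ibr L 0 = car L"
| "ibr L (Suc 0) = car L"
| "ibr L (Suc (Suc k)) = {lbr L x y | x y. x \<in> car L \<and> y \<in> ibr L (Suc k)}"

definition lcs :: "('a::ab_group_add, 'm) glie_scheme \<Rightarrow> nat \<Rightarrow> 'a set" where
  "lcs L k = module.span (lsc L) (ibr L k)"

definition fin_dim :: "('a::ab_group_add, 'm) glie_scheme \<Rightarrow> bool" where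
  "fin_dim L \<longleftrightarrow> (\<exists>B. finite B \<and> B \<subseteq> car L \<and> module.span (lsc L) B = car L)"

definition nilpotent_lie :: "('a::ab_group_add, 'm) glie_scheme \<Rightarrow> bool" where
  "nilpotent_lie L \<longleftrightarrow> (\<exists>n. lcs L n = {0})"

text \<open>Compatible families of degree p in the inverse system (L_alpha), the transition
  maps L_beta \<rightarrow> L_alpha existing when ker rho_beta \<subseteq> ker rho_alpha.\<close>
definition compat_families ::
  "('a::ab_group_add, 'm) glie_scheme \<Rightarrow> 'i set \<Rightarrow> ('i \<Rightarrow> ('b::ab_group_add, 'n) glie_scheme)
     \<Rightarrow> ('i \<Rightarrow> 'a \<Rightarrow> 'b) \<Rightarrow> nat \<Rightarrow> ('i \<Rightarrow> 'b) set" where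
  "compat_families L A M \<rho> p =
     {y \<in> extensional A. (\<forall>\<alpha>\<in>A. y \<alpha> \<in> lgr (M \<alpha>) p) \<and>
        (\<forall>\<alpha>\<in>A. \<forall>\<beta>\<in>A. hom_ker L (\<rho> \<beta>) \<subseteq> hom_ker L (\<rho> \<alpha>) \<longrightarrow>
            (\<forall>x\<in>car L. \<rho> \<beta> x = y \<beta> \<longrightarrow> \<rho> \<alpha> x = y \<alpha>))}"

definition complete_enriched ::
  "('a::ab_group_add, 'm) glie_scheme \<Rightarrow> 'i set \<Rightarrow> ('i \<Rightarrow> ('b::ab_group_add, 'n) glie_scheme)
     \<Rightarrow> ('i \<Rightarrow> 'a \<Rightarrow> 'b) \<Rightarrow> bool" where
  "complete_enriched L A M \<rho> \<longleftrightarrow>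
     graded_lie L \<and> A \<noteq> {} \<and>
     (\<forall>\<alpha>\<in>A. graded_lie (M \<alpha>) \<and> lie_hom L (M \<alpha>) (\<rho> \<alpha>) \<and> \<rho> \<alpha> ` car L = car (M \<alpha>) \<and>
              fin_dim (M \<alpha>) \<and> nilpotent_lie (M \<alpha>)) \<and>
     (\<forall>\<alpha>\<in>A. \<forall>\<beta>\<in>A. \<exists>\<gamma>\<in>A. hom_ker L (\<rho> \<gamma>) \<subseteq> hom_ker L (\<rho> \<alpha>) \<inter> hom_ker L (\<rho> \<beta>)) \<and>
     (\<Inter>\<alpha>\<in>A. hom_ker L (\<rho> \<alpha>)) = {0} \<and>
     (\<forall>p. bij_betw (\<lambda>x. restrict (\<lambda>\<alpha>. \<rho> \<alpha> x) A) (lgr L p) (compat_families L A M \<rho> p))"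

text \<open>Closure L^(k) of L^k, i.e. lim_alpha rho_alpha(L^k), viewed inside L \<cong> lim L_alpha.\<close>
definition lcs_closure ::
  "('a::ab_group_add, 'm) glie_scheme \<Rightarrow> 'i set \<Rightarrow> ('i \<Rightarrow> 'a \<Rightarrow> 'b) \<Rightarrow> nat \<Rightarrow> 'a set" where
  "lcs_closure L A \<rho> k = {x \<in> car L. \<forall>\<alpha>\<in>A. \<rho> \<alpha> x \<in> \<rho> \<alpha> ` lcs L k}"

definition coset :: "'a::plus \<Rightarrow> 'a set \<Rightarrow> 'a set" where
  "coset x W = (\<lambda>w. x + w) ` W"

definition quot :: "'a::plus set \<Rightarrow> 'a set \<Rightarrow> 'a set set" where
  "quot V W = (\<lambda>x. coset x W) ` V"

definition fin_dim_quot :: "(rat \<Rightarrow> 'a::ab_group_add \<Rightarrow> 'a) \<Rightarrow> 'a set \<Rightarrow> 'a set \<Rightarrow> bool" where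
  "fin_dim_quot s V W \<longleftrightarrow> (\<exists>F. finite F \<and> F \<subseteq> V \<and> V \<subseteq> module.span s (F \<union> W))"

text \<open>Pronilpotent: L \<rightarrow> lim_n L/L^n is an isomorphism (limit of graded spaces, taken degreewise).\<close>
definition pronilpotent :: "('a::ab_group_add, 'm) glie_scheme \<Rightarrow> bool" where
  "pronilpotent L \<longleftrightarrow>
     (\<forall>p. bij_betw (\<lambda>x. \<lambda>n. coset x (lcs L n \<inter> lgr L p)) (lgr L p)
          {c. \<forall>n. c n \<in> quot (lgr L p) (lcs L n \<inter> lgr L p) \<and> c (Suc n) \<subseteq> c n})"

end

theory Submission
  imports Defs "HOL-Library.Function_Algebras"
begin


locale gl =
  fixes L :: "('a::ab_group_add, 'm) glie_scheme"
  assumes gl: "graded_lie L"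

sublocale gl \<subseteq> V: vector_space "lsc L"
  using gl unfolding graded_lie_def by (elim conjE) assumption

context gl begin

lemma sub_gr: "V.subspace (lgr L p)"
proof -
  have "\<forall>p. V.subspace (lgr L p)"
    using gl unfolding graded_lie_def by (elim conjE) assumption
  then show ?thesis by blast
qed

lemma direct: "(\<forall>p<n. x p \<in> lgr L p) \<Longrightarrow> (\<Sum>p<n. x p) = 0 \<Longrightarrow> p < n \<Longrightarrow> x p = 0"
proof -
  have "\<forall>n (x::nat \<Rightarrow> 'a). (\<forall>p<n. x p \<in> lgr L p) \<and> (\<Sum>p<n. x p) = 0 \<longrightarrow> (\<forall>p<n. x p = 0)"
    using gl unfolding graded_lie_def by (elim conjE) assumption
  then show "(\<forall>p<n. x p \<in> lgr L p) \<Longrightarrow> (\<Sum>p<n. x p) = 0 \<Longrightarrow> p < n \<Longrightarrow> x p = 0" by blast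
qed

lemma br_props:
  assumes "x \<in> car L" "y \<in> car L" "z \<in> car L"
  shows "lbr L x y \<in> car L"
    "lbr L (x + y) z = lbr L x z + lbr L y z"
    "lbr L x (y + z) = lbr L x y + lbr L x z"
    "lbr L (lsc L c x) y = lsc L c (lbr L x y)"
    "lbr L x (lsc L c y) = lsc L c (lbr L x y)"
proof -
  have h: "\<forall>x\<in>car L. \<forall>y\<in>car L. \<forall>z\<in>car L. \<forall>c.
        lbr L x y \<in> car L \<and>
        lbr L (x + y) z = lbr L x z + lbr L y z \<and>
        lbr L x (y + z) = lbr L x y + lbr L x z \<and>
        lbr L (lsc L c x) y = lsc L c (lbr L x y) \<and>
        lbr L x (lsc L c y) = lsc L c (lbr L x y)"
    using gl unfolding graded_lie_def by (elim conjE) assumption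
  show "lbr L x y \<in> car L"
    "lbr L (x + y) z = lbr L x z + lbr L y z"
    "lbr L x (y + z) = lbr L x y + lbr L x z"
    "lbr L (lsc L c x) y = lsc L c (lbr L x y)"
    "lbr L x (lsc L c y) = lsc L c (lbr L x y)"
    using h assms by blast+
qed

lemma br_grade: "x \<in> lgr L p \<Longrightarrow> y \<in> lgr L q \<Longrightarrow> lbr L x y \<in> lgr L (p + q)"
proof -
  have "\<forall>p q. \<forall>x\<in>lgr L p. \<forall>y\<in>lgr L q. lbr L x y \<in> lgr L (p + q)"
    using gl unfolding graded_lie_def by (elim conjE) assumption
  then show "x \<in> lgr L p \<Longrightarrow> y \<in> lgr L q \<Longrightarrow> lbr L x y \<in> lgr L (p + q)" by blast
qed

lemma jacobi: "x \<in> lgr L p \<Longrightarrow> y \<in> lgr L q \<Longrightarrow> z \<in> lgr L r \<Longrightarrow>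
   lbr L x (lbr L y z) = lbr L (lbr L x y) z + lsc L ((- 1) ^ (p * q)) (lbr L y (lbr L x z))"
proof -
  have "\<forall>p q r. \<forall>x\<in>lgr L p. \<forall>y\<in>lgr L q. \<forall>z\<in>lgr L r.
        lbr L x (lbr L y z) = lbr L (lbr L x y) z + lsc L ((- 1) ^ (p * q)) (lbr L y (lbr L x z))"
    using gl unfolding graded_lie_def by (elim conjE) assumption
  then show "x \<in> lgr L p \<Longrightarrow> y \<in> lgr L q \<Longrightarrow> z \<in> lgr L r \<Longrightarrow>
   lbr L x (lbr L y z) = lbr L (lbr L x y) z + lsc L ((- 1) ^ (p * q)) (lbr L y (lbr L x z))" by blast
qed

lemma car_sub: "V.subspace (car L)"
  unfolding car_def by simp

lemma gr_car: "lgr L p \<subseteq> car L"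
  unfolding car_def by (meson UN_I V.span_superset iso_tuple_UNIV_I subset_iff)

lemma zero_car[simp]: "0 \<in> car L"
  using V.subspace_0 car_sub by blast

lemma zero_gr[simp]: "0 \<in> lgr L p"
  using V.subspace_0 sub_gr by blast

lemma car_add: "x \<in> car L \<Longrightarrow> y \<in> car L \<Longrightarrow> x + y \<in> car L"
  using V.subspace_add car_sub by blast
lemma car_diff: "x \<in> car L \<Longrightarrow> y \<in> car L \<Longrightarrow> x - y \<in> car L"
  using V.subspace_diff car_sub by blast
lemma car_scale: "x \<in> car L \<Longrightarrow> lsc L c x \<in> car L"
  using V.subspace_scale car_sub by blast
lemma car_neg: "x \<in> car L \<Longrightarrow> - x \<in> car L"
  using V.subspace_neg car_sub by blast

lemma span_car: "S \<subseteq> car L \<Longrightarrow> V.span S \<subseteq> car L"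
  using V.span_minimal car_sub by blast

lemma br_car: "x \<in> car L \<Longrightarrow> y \<in> car L \<Longrightarrow> lbr L x y \<in> car L"
  using br_props by blast

lemma br_zero_left[simp]: "y \<in> car L \<Longrightarrow> lbr L 0 y = 0"
proof -
  assume y: "y \<in> car L"
  have "lbr L (0 + 0) y = lbr L 0 y + lbr L 0 y" using br_props(2)[OF zero_car zero_car y] .
  then show ?thesis by simp
qed

lemma br_zero_right[simp]: "x \<in> car L \<Longrightarrow> lbr L x 0 = 0"
proof -
  assume y: "x \<in> car L"
  have "lbr L x (0 + 0) = lbr L x 0 + lbr L x 0" using br_props(3)[OF y zero_car zero_car] .
  then show ?thesis by simp
qed

lemma br_add_left: "x \<in> car L \<Longrightarrow> y \<in> car L \<Longrightarrow> z \<in> car L \<Longrightarrow> lbr L (x + y) z = lbr L x z + lbr L y z"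
  using br_props by blast
lemma br_add_right: "x \<in> car L \<Longrightarrow> y \<in> car L \<Longrightarrow> z \<in> car L \<Longrightarrow> lbr L x (y + z) = lbr L x y + lbr L x z"
  using br_props by blast
lemma br_scale_left: "x \<in> car L \<Longrightarrow> y \<in> car L \<Longrightarrow> lbr L (lsc L c x) y = lsc L c (lbr L x y)"
  by (rule br_props(4)[OF _ _ zero_car])
lemma br_scale_right: "x \<in> car L \<Longrightarrow> y \<in> car L \<Longrightarrow> lbr L x (lsc L c y) = lsc L c (lbr L x y)"
  by (rule br_props(5)[OF _ _ zero_car])

lemma br_diff_left: "x \<in> car L \<Longrightarrow> y \<in> car L \<Longrightarrow> z \<in> car L \<Longrightarrow> lbr L (x - y) z = lbr L x z - lbr L y z"
proof -
  assume a: "x \<in> car L" "y \<in> car L" "z \<in> car L"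
  have "lbr L ((x - y) + y) z = lbr L (x - y) z + lbr L y z"
    using a by (intro br_add_left car_diff)
  then show ?thesis by (simp add: eq_diff_eq)
qed
lemma br_diff_right: "x \<in> car L \<Longrightarrow> y \<in> car L \<Longrightarrow> z \<in> car L \<Longrightarrow> lbr L x (y - z) = lbr L x y - lbr L x z"
proof -
  assume a: "x \<in> car L" "y \<in> car L" "z \<in> car L"
  have "lbr L x ((y - z) + z) = lbr L x (y - z) + lbr L x z"
    using a by (intro br_add_right car_diff)
  then show ?thesis by (simp add: eq_diff_eq)
qed

lemma br_sum_right: "finite J \<Longrightarrow> x \<in> car L \<Longrightarrow> (\<forall>j\<in>J. y j \<in> car L) \<Longrightarrow>
   lbr L x (\<Sum>j\<in>J. y j) = (\<Sum>j\<in>J. lbr L x (y j))"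
proof (induction J rule: finite_induct)
  case empty then show ?case by simp
next
  case (insert a F)
  have "(\<Sum>j\<in>F. y j) \<in> car L" using insert by (intro V.subspace_sum[OF car_sub]) auto
  then show ?case using insert by (simp add: br_add_right)
qed

lemma br_span_left:
  assumes S: "S \<subseteq> car L" and y: "y \<in> car L" and x: "x \<in> V.span S"
  shows "lbr L x y \<in> V.span {lbr L a y | a. a \<in> S}"
proof -
  have "x \<in> car L \<and> lbr L x y \<in> V.span {lbr L a y | a. a \<in> S}"
    using x
  proof (induction rule: V.span_induct_alt)
    case base then show ?case using y by (simp add: V.span_zero)
  next
    case (step c a z)
    have a: "a \<in> car L" using step S by auto
    have "lbr L (lsc L c a + z) y = lsc L c (lbr L a y) + lbr L z y"
      using a step y by (simp add: br_add_left car_scale br_scale_left)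
    moreover have "lbr L a y \<in> V.span {lbr L a y | a. a \<in> S}" using step by (auto intro: V.span_base)
    ultimately show ?case using step a
      by (auto intro!: V.span_add V.span_scale car_add car_scale)
  qed
  then show ?thesis by blast
qed

lemma br_span_right:
  assumes S: "S \<subseteq> car L" and x: "x \<in> car L" and y: "y \<in> V.span S"
  shows "lbr L x y \<in> V.span {lbr L x a | a. a \<in> S}"
proof -
  have "y \<in> car L \<and> lbr L x y \<in> V.span {lbr L x a | a. a \<in> S}"
    using y
  proof (induction rule: V.span_induct_alt)
    case base then show ?case using x by (simp add: V.span_zero)
  next
    case (step c a z)
    have a: "a \<in> car L" using step S by auto
    have "lbr L x (lsc L c a + z) = lsc L c (lbr L x a) + lbr L x z"
      using a step x by (simp add: br_add_right car_scale br_scale_right)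
    moreover have "lbr L x a \<in> V.span {lbr L x a | a. a \<in> S}" using step by (auto intro: V.span_base)
    ultimately show ?case using step a
      by (auto intro!: V.span_add V.span_scale car_add car_scale)
  qed
  then show ?thesis by blast
qed

lemma br_span:
  assumes S: "S \<subseteq> car L" and T: "T \<subseteq> car L" and x: "x \<in> V.span S" and y: "y \<in> V.span T"
  shows "lbr L x y \<in> V.span {lbr L a b | a b. a \<in> S \<and> b \<in> T}"
proof -
  have yc: "y \<in> car L" using span_car[OF T] y by auto
  have 1: "lbr L x y \<in> V.span {lbr L a y | a. a \<in> S}" by (rule br_span_left[OF S yc x])
  have "{lbr L a y | a. a \<in> S} \<subseteq> V.span {lbr L a b | a b. a \<in> S \<and> b \<in> T}"
  proof
    fix z assume "z \<in> {lbr L a y | a. a \<in> S}"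
    then obtain a where a: "a \<in> S" "z = lbr L a y" by auto
    have "lbr L a y \<in> V.span {lbr L a b | b. b \<in> T}" using br_span_right[OF T _ y] a S by auto
    moreover have "{lbr L a b | b. b \<in> T} \<subseteq> {lbr L a b | a b. a \<in> S \<and> b \<in> T}" using a by auto
    ultimately show "z \<in> V.span {lbr L a b | a b. a \<in> S \<and> b \<in> T}" using a V.span_mono by blast
  qed
  then show ?thesis using 1 V.span_minimal V.subspace_span by blast
qed

end


lemma sum_ext_zero:
  fixes f :: "nat \<Rightarrow> 'b::comm_monoid_add"
  assumes "\<forall>q\<ge>n. f q = 0" "n \<le> N"
  shows "(\<Sum>q<N. f q) = (\<Sum>q<n. f q)"
  by (rule sum.mono_neutral_right) (use assms in auto)

context gl begin

abbreviation hom where "hom \<equiv> (\<Union>p. lgr L p)"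

lemma hom_car: "hom \<subseteq> car L" using gr_car by blast

lemma decomp:
  assumes H: "H \<subseteq> hom" and x: "x \<in> V.span H"
  shows "\<exists>n xs. (\<forall>q. xs q \<in> V.span (H \<inter> lgr L q)) \<and> (\<forall>q\<ge>n. xs q = 0) \<and> x = (\<Sum>q<n. xs q)"
  using x
proof (induction rule: V.span_induct_alt)
  case base
  show ?case by (rule exI[of _ 0], rule exI[of _ "\<lambda>q. 0"]) (simp add: V.span_zero)
next
  case (step c h y)
  then obtain n xs where IH: "\<forall>q. xs q \<in> V.span (H \<inter> lgr L q)" "\<forall>q\<ge>n. xs q = 0" "y = (\<Sum>q<n. xs q)"
    by blast
  from step(1) H obtain q0 where q0: "h \<in> lgr L q0" by blast
  define xs' where "xs' = (\<lambda>q. xs q + (if q = q0 then lsc L c h else 0))"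
  define n' where "n' = max n (Suc q0)"
  have 1: "\<forall>q. xs' q \<in> V.span (H \<inter> lgr L q)"
  proof
    fix q
    have "lsc L c h \<in> V.span (H \<inter> lgr L q0)" using step(1) q0 by (intro V.span_scale V.span_base) auto
    then show "xs' q \<in> V.span (H \<inter> lgr L q)" unfolding xs'_def using IH(1)
      by (auto intro!: V.span_add simp: V.span_zero)
  qed
  have 2: "\<forall>q\<ge>n'. xs' q = 0" using IH(2) unfolding xs'_def n'_def by auto
  have "(\<Sum>q<n'. xs' q) = (\<Sum>q<n'. xs q) + (\<Sum>q<n'. (if q = q0 then lsc L c h else 0))"
    unfolding xs'_def by (simp add: sum.distrib)
  also have "(\<Sum>q<n'. xs q) = (\<Sum>q<n. xs q)" using IH(2) by (intro sum_ext_zero) (auto simp: n'_def)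
  also have "(\<Sum>q<n'. (if q = q0 then lsc L c h else 0)) = lsc L c h"
    by (simp add: n'_def less_max_iff_disj)
  finally have "(\<Sum>q<n'. xs' q) = lsc L c h + y" using IH(3) by (simp add: add.commute)
  then show ?case using 1 2 by metis
qed

lemma unique:
  assumes "\<forall>q<n. a q \<in> lgr L q" "\<forall>q<n. b q \<in> lgr L q" "(\<Sum>q<n. a q) = (\<Sum>q<n. b q)" "q < n"
  shows "a q = b q"
proof -
  have "(\<lambda>q. a q - b q) q = 0"
  proof (rule direct[where n=n])
    show "\<forall>p<n. a p - b p \<in> lgr L p" using assms(1,2) by (auto intro: V.subspace_diff[OF sub_gr])
    show "(\<Sum>p<n. a p - b p) = 0" using assms(3) by (simp add: sum_subtractf)
  qed (use assms in auto)
  then show ?thesis by simp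
qed

lemma span_homog:
  assumes H: "H \<subseteq> hom" and x: "x \<in> V.span H" and xp: "x \<in> lgr L p"
  shows "x \<in> V.span (H \<inter> lgr L p)"
proof -
  obtain n xs where d: "\<forall>q. xs q \<in> V.span (H \<inter> lgr L q)" "\<forall>q\<ge>n. xs q = 0" "x = (\<Sum>q<n. xs q)"
    using decomp[OF H x] by blast
  define N where "N = max n (Suc p)"
  have sg: "xs q \<in> lgr L q" for q
  proof -
    have "V.span (H \<inter> lgr L q) \<subseteq> lgr L q" by (rule V.span_minimal[OF _ sub_gr]) auto
    then show ?thesis using d(1) by blast
  qed
  have s1: "(\<Sum>q<N. xs q) = x" using d by (subst sum_ext_zero[of n]) (auto simp: N_def)
  have s2: "(\<Sum>q<N. (if q = p then x else 0)) = x" by (simp add: N_def less_max_iff_disj)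
  have "xs p = (\<lambda>q. if q = p then x else 0) p"
  proof (rule unique[where n=N and a=xs and b="\<lambda>q. if q = p then x else 0" and q=p])
    show "\<forall>q<N. (if q = p then x else 0) \<in> lgr L q" using xp by auto
    show "(\<Sum>q<N. xs q) = (\<Sum>q<N. (if q = p then x else 0))" using s1 s2 by simp
  qed (use sg in \<open>auto simp: N_def\<close>)
  then have "xs p = x" by simp
  then show ?thesis using d(1) by metis
qed

lemma homog_zero:
  assumes "x \<in> lgr L p" "x \<in> lgr L q" "p \<noteq> q"
  shows "x = 0"
proof -
  define N where "N = Suc (max p q)"
  have e: "(\<Sum>i<N. (if i = p then x else 0)) = (\<Sum>i<N. (if i = q then x else 0))" by (simp add: N_def)
  have "(\<lambda>i. if i = p then x else 0) p = (\<lambda>i. if i = q then x else 0) p"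
    by (rule unique[where n=N and a="\<lambda>i. if i = p then x else 0" and b="\<lambda>i. if i = q then x else 0" and q=p])
       (use assms e in \<open>auto simp: N_def\<close>)
  then show ?thesis using assms by simp
qed

lemma span_sub: "V.subspace S \<Longrightarrow> V.span S = S" by simp

lemma car_span_hom: "car L = V.span hom" unfolding car_def by simp

lemma ibr_car: "ibr L k \<subseteq> car L"
proof -
  have "ibr L (Suc k) \<subseteq> car L" for k
  proof (induction k)
    case 0 then show ?case by simp
  next
    case (Suc k) then show ?case using br_car by auto
  qed
  then show ?thesis by (cases k) auto
qed

lemma lcs_car: "lcs L k \<subseteq> car L"
  unfolding lcs_def using span_car[OF ibr_car] .

lemma lcs_sub: "V.subspace (lcs L k)" unfolding lcs_def by simp

lemma lcs_0: "lcs L 0 = car L" unfolding lcs_def using car_sub by simp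
lemma lcs_1: "lcs L (Suc 0) = car L" unfolding lcs_def using car_sub by simp

lemma ibr_mono_Suc: "ibr L (Suc k) \<subseteq> ibr L k"
proof -
  have "ibr L (Suc (Suc k)) \<subseteq> ibr L (Suc k)" for k
  proof (induction k)
    case 0 then show ?case using br_car by auto
  next
    case (Suc k)
    show ?case
    proof
      fix z assume "z \<in> ibr L (Suc (Suc (Suc k)))"
      then obtain x y where "z = lbr L x y" "x \<in> car L" "y \<in> ibr L (Suc (Suc k))" by auto
      moreover have "y \<in> ibr L (Suc k)" using Suc \<open>y \<in> ibr L (Suc (Suc k))\<close> by blast
      ultimately show "z \<in> ibr L (Suc (Suc k))" by auto
    qed
  qed
  then show ?thesis by (cases k) auto
qed

lemma lcs_mono_Suc: "lcs L (Suc k) \<subseteq> lcs L k"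
  unfolding lcs_def by (rule V.span_mono[OF ibr_mono_Suc])

lemma lcs_antimono: "m \<le> n \<Longrightarrow> lcs L n \<subseteq> lcs L m"
proof (induction n rule: dec_induct)
  case base then show ?case by simp
next
  case (step n) then show ?case using lcs_mono_Suc by blast
qed

lemma br_lcs: "x \<in> car L \<Longrightarrow> y \<in> lcs L (Suc k) \<Longrightarrow> lbr L x y \<in> lcs L (Suc (Suc k))"
proof -
  assume x: "x \<in> car L" and y: "y \<in> lcs L (Suc k)"
  have "lbr L x y \<in> V.span {lbr L x a | a. a \<in> ibr L (Suc k)}"
    using br_span_right[OF ibr_car x] y unfolding lcs_def by blast
  moreover have "{lbr L x a | a. a \<in> ibr L (Suc k)} \<subseteq> ibr L (Suc (Suc k))" using x by auto
  ultimately show ?thesis unfolding lcs_def using V.span_mono by blast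
qed

definition Gen where "Gen k = {lbr L a b | a b. a \<in> hom \<and> b \<in> lcs L (Suc k) \<inter> hom}"

lemma Gen_sub: "Gen k \<subseteq> lcs L (Suc (Suc k)) \<inter> hom"
proof
  fix z assume "z \<in> Gen k"
  then obtain a b p q where "z = lbr L a b" "a \<in> lgr L p" "b \<in> lcs L (Suc k)" "b \<in> lgr L q"
    unfolding Gen_def by blast
  then show "z \<in> lcs L (Suc (Suc k)) \<inter> hom" using br_lcs br_grade gr_car by blast
qed

lemma Gen_span:
  assumes IH: "lcs L (Suc k) \<subseteq> V.span (lcs L (Suc k) \<inter> hom)"
  shows "lcs L (Suc (Suc k)) \<subseteq> V.span (Gen k)"
proof -
  have "ibr L (Suc (Suc k)) \<subseteq> V.span (Gen k)"
  proof
    fix z assume "z \<in> ibr L (Suc (Suc k))"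
    then obtain x y where z: "z = lbr L x y" "x \<in> car L" "y \<in> ibr L (Suc k)" by auto
    have y: "y \<in> V.span (lcs L (Suc k) \<inter> hom)"
      using z(3) IH V.span_superset[of "ibr L (Suc k)"] unfolding lcs_def by blast
    have "z \<in> V.span {lbr L a b | a b. a \<in> hom \<and> b \<in> lcs L (Suc k) \<inter> hom}"
      unfolding z(1) by (rule br_span[OF hom_car _ _ y]) (use lcs_car z(2) car_span_hom in auto)
    then show "z \<in> V.span (Gen k)" unfolding Gen_def .
  qed
  then show ?thesis unfolding lcs_def by (intro V.span_minimal) auto
qed

lemma lcs_homog_Suc: "lcs L (Suc k) \<subseteq> V.span (lcs L (Suc k) \<inter> hom)"
proof (induction k)
  case 0
  have "car L \<inter> hom = hom" using hom_car by blast
  then show ?case using lcs_1 car_span_hom by simp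
next
  case (Suc k)
  have "V.span (Gen k) \<subseteq> V.span (lcs L (Suc (Suc k)) \<inter> hom)" using Gen_sub V.span_mono by blast
  then show ?case using Gen_span[OF Suc] by blast
qed

lemma lcs_gen: "lcs L (Suc (Suc k)) \<subseteq> V.span (Gen k)"
  using Gen_span[OF lcs_homog_Suc] .

lemma lcs_homog: "lcs L k \<subseteq> V.span (lcs L k \<inter> hom)"
  using lcs_homog_Suc[of 0] lcs_homog_Suc[of "k - 1"] lcs_0 lcs_1 by (cases k) auto

lemma jac_gen:
  assumes a: "a \<in> lgr L p" and b: "b \<in> lgr L q" and c: "c \<in> lcs L (Suc k)" "c \<in> lgr L r"
  shows "lbr L (lbr L a b) c \<in> lcs L (Suc (Suc (Suc k)))"
proof -
  have ac: "a \<in> car L" "b \<in> car L" "c \<in> car L" using a b c gr_car by auto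
  have J: "lbr L a (lbr L b c) = lbr L (lbr L a b) c + lsc L ((- 1) ^ (p * q)) (lbr L b (lbr L a c))"
    using jacobi[OF a b c(2)] .
  have 1: "lbr L a (lbr L b c) \<in> lcs L (Suc (Suc (Suc k)))"
    using br_lcs[OF ac(1) br_lcs[OF ac(2) c(1)]] .
  have 2: "lbr L b (lbr L a c) \<in> lcs L (Suc (Suc (Suc k)))"
    using br_lcs[OF ac(2) br_lcs[OF ac(1) c(1)]] .
  have "lbr L (lbr L a b) c = lbr L a (lbr L b c) - lsc L ((- 1) ^ (p * q)) (lbr L b (lbr L a c))"
    using J by (simp add: eq_diff_eq)
  moreover have "lsc L ((- 1) ^ (p * q)) (lbr L b (lbr L a c)) \<in> lcs L (Suc (Suc (Suc k)))"
    by (rule V.subspace_scale[OF lcs_sub 2])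
  ultimately show ?thesis using V.subspace_diff[OF lcs_sub 1] by simp
qed

lemma jac2:
  assumes z: "z \<in> lcs L 2" and c: "c \<in> lcs L (Suc k)"
  shows "lbr L z c \<in> lcs L (Suc (Suc (Suc k)))"
proof -
  have "lcs L 2 = lcs L (Suc (Suc 0))" by (simp add: numeral_2_eq_2)
  then have z': "z \<in> V.span (Gen 0)" using lcs_gen[of 0] z by blast
  have c': "c \<in> V.span (lcs L (Suc k) \<inter> hom)" using lcs_homog c by blast
  have G0: "Gen 0 \<subseteq> car L" using Gen_sub[of 0] lcs_car by blast
  have "lbr L z c \<in> V.span {lbr L g h | g h. g \<in> Gen 0 \<and> h \<in> lcs L (Suc k) \<inter> hom}"
    by (rule br_span[OF G0 _ z' c']) (use lcs_car in auto)
  moreover have "{lbr L g h | g h. g \<in> Gen 0 \<and> h \<in> lcs L (Suc k) \<inter> hom} \<subseteq> lcs L (Suc (Suc (Suc k)))"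
  proof
    fix w assume "w \<in> {lbr L g h | g h. g \<in> Gen 0 \<and> h \<in> lcs L (Suc k) \<inter> hom}"
    then obtain a b h p q r where "w = lbr L (lbr L a b) h" "a \<in> lgr L p" "b \<in> lgr L q"
      "h \<in> lcs L (Suc k)" "h \<in> lgr L r"
      unfolding Gen_def by blast
    then show "w \<in> lcs L (Suc (Suc (Suc k)))" using jac_gen by blast
  qed
  ultimately show ?thesis using V.span_minimal[OF _ lcs_sub] by blast
qed

end


context gl begin

lemma sum_form:
  assumes J: "finite J" and v: "\<forall>i\<in>J. v i \<in> car L" and U: "\<forall>i\<in>J. V.subspace (U i) \<and> U i \<subseteq> car L"
  shows "V.span {lbr L (v i) m | i m. i \<in> J \<and> m \<in> U i}
           \<subseteq> {\<Sum>i\<in>J. lbr L (v i) (y i) | y. \<forall>i\<in>J. y i \<in> U i}"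
proof (rule V.span_minimal)
  show "{lbr L (v i) m | i m. i \<in> J \<and> m \<in> U i} \<subseteq> {\<Sum>i\<in>J. lbr L (v i) (y i) | y. \<forall>i\<in>J. y i \<in> U i}"
  proof
    fix z assume "z \<in> {lbr L (v i) m | i m. i \<in> J \<and> m \<in> U i}"
    then obtain i m where z: "z = lbr L (v i) m" "i \<in> J" "m \<in> U i" by blast
    define y where "y = (\<lambda>i'. if i' = i then m else 0)"
    have "\<forall>i'\<in>J. y i' \<in> U i'" using U z by (auto simp: y_def intro: V.subspace_0)
    moreover have "(\<Sum>i'\<in>J. lbr L (v i') (y i')) = z"
    proof -
      have "(\<Sum>i'\<in>J. lbr L (v i') (y i')) = (\<Sum>i'\<in>J. if i' = i then lbr L (v i) m else 0)"
        by (rule sum.cong) (use v in \<open>auto simp: y_def\<close>)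
      also have "\<dots> = lbr L (v i) m" using J z(2) by simp
      finally show ?thesis using z by simp
    qed
    ultimately show "z \<in> {\<Sum>i\<in>J. lbr L (v i) (y i) | y. \<forall>i\<in>J. y i \<in> U i}"
      by (intro CollectI exI[of _ y] conjI) auto
  qed
  show "V.subspace {\<Sum>i\<in>J. lbr L (v i) (y i) | y. \<forall>i\<in>J. y i \<in> U i}"
  proof (rule V.subspaceI)
    have e: "(\<Sum>i\<in>J. lbr L (v i) 0) = 0" using v by simp
    have z: "\<forall>i\<in>J. 0 \<in> U i" using U by (simp add: V.subspace_0)
    show "0 \<in> {\<Sum>i\<in>J. lbr L (v i) (y i) | y. \<forall>i\<in>J. y i \<in> U i}"
      by (rule CollectI, rule exI[of _ "\<lambda>_. 0"]) (use e z in simp)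
  next
    fix x x' assume "x \<in> {\<Sum>i\<in>J. lbr L (v i) (y i) | y. \<forall>i\<in>J. y i \<in> U i}"
      "x' \<in> {\<Sum>i\<in>J. lbr L (v i) (y i) | y. \<forall>i\<in>J. y i \<in> U i}"
    then obtain y y' where y: "x = (\<Sum>i\<in>J. lbr L (v i) (y i))" "\<forall>i\<in>J. y i \<in> U i"
      and y': "x' = (\<Sum>i\<in>J. lbr L (v i) (y' i))" "\<forall>i\<in>J. y' i \<in> U i" by blast
    have "x + x' = (\<Sum>i\<in>J. lbr L (v i) (y i + y' i))"
      unfolding y(1) y'(1) sum.distrib[symmetric]
    proof (rule sum.cong)
      fix i assume i: "i \<in> J"
      have "y i \<in> car L" "y' i \<in> car L" "v i \<in> car L" using U y y' v i by blast+
      then show "lbr L (v i) (y i) + lbr L (v i) (y' i) = lbr L (v i) (y i + y' i)"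
        by (simp add: br_add_right)
    qed simp
    moreover have "\<forall>i\<in>J. y i + y' i \<in> U i" using U y y' V.subspace_add by blast
    ultimately show "x + x' \<in> {\<Sum>i\<in>J. lbr L (v i) (y i) | y. \<forall>i\<in>J. y i \<in> U i}"
      by (intro CollectI exI[of _ "\<lambda>i. y i + y' i"] conjI) auto
  next
    fix c x assume "x \<in> {\<Sum>i\<in>J. lbr L (v i) (y i) | y. \<forall>i\<in>J. y i \<in> U i}"
    then obtain y where y: "x = (\<Sum>i\<in>J. lbr L (v i) (y i))" "\<forall>i\<in>J. y i \<in> U i" by blast
    have "lsc L c x = (\<Sum>i\<in>J. lbr L (v i) (lsc L c (y i)))"
      unfolding y(1) V.scale_sum_right
    proof (rule sum.cong)
      fix i assume i: "i \<in> J"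
      have "y i \<in> car L" "v i \<in> car L" using U y v i by blast+
      then show "lsc L c (lbr L (v i) (y i)) = lbr L (v i) (lsc L c (y i))"
        by (simp add: br_scale_right)
    qed simp
    moreover have "\<forall>i\<in>J. lsc L c (y i) \<in> U i" using U y V.subspace_scale by blast
    ultimately show "lsc L c x \<in> {\<Sum>i\<in>J. lbr L (v i) (y i) | y. \<forall>i\<in>J. y i \<in> U i}"
      by (intro CollectI exI[of _ "\<lambda>i. lsc L c (y i)"] conjI) auto
  qed
qed

lemma span_trans_un:
  assumes "x \<in> V.span (A \<union> B)" "B \<subseteq> V.span (A \<union> C)"
  shows "x \<in> V.span (A \<union> C)"
proof -
  have "A \<union> B \<subseteq> V.span (A \<union> C)" using assms(2) V.span_superset by blast
  then show ?thesis using assms(1) V.span_minimal[OF _ V.subspace_span] by blast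
qed

lemma KL_step:
  fixes J :: "'j set" and d :: "'j \<Rightarrow> nat" and v :: "'j \<Rightarrow> 'a"
  assumes vJ: "\<forall>i\<in>J. v i \<in> lgr L (d i)"
    and gen: "\<forall>q\<le>p. lgr L q \<subseteq> V.span (v ` {i\<in>J. d i = q} \<union> (lcs L 2 \<inter> lgr L q))"
  shows "lcs L (Suc (Suc k)) \<inter> lgr L p \<subseteq>
     V.span ({lbr L (v i) m | i m. i \<in> J \<and> m \<in> lcs L (Suc k) \<inter> lgr L (p - d i)}
             \<union> (lcs L (Suc (Suc (Suc k))) \<inter> lgr L p))"
    (is "_ \<subseteq> V.span (?S \<union> ?R)")
proof
  fix x assume x: "x \<in> lcs L (Suc (Suc k)) \<inter> lgr L p"
  have Gh: "Gen k \<subseteq> hom" using Gen_sub by blast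
  have xs: "x \<in> V.span (Gen k \<inter> lgr L p)"
    using span_homog[OF Gh] lcs_gen x by blast
  have "Gen k \<inter> lgr L p \<subseteq> V.span (?S \<union> ?R)"
  proof
    fix g assume g: "g \<in> Gen k \<inter> lgr L p"
    then obtain a b q r where ab: "g = lbr L a b" "a \<in> lgr L q" "b \<in> lcs L (Suc k)" "b \<in> lgr L r"
      unfolding Gen_def by blast
    show "g \<in> V.span (?S \<union> ?R)"
    proof (cases "g = 0")
      case True then show ?thesis by (simp add: V.span_zero)
    next
      case False
      have "g \<in> lgr L (q + r)" using ab br_grade by blast
      then have qr: "q + r = p" using homog_zero[of g "q + r" p] g False by blast
      then have "q \<le> p" by simp
      then have "a \<in> V.span (v ` {i\<in>J. d i = q} \<union> (lcs L 2 \<inter> lgr L q))" using gen ab by blast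
      then obtain u w where uw: "a = u + w" "u \<in> V.span (v ` {i\<in>J. d i = q})"
        "w \<in> V.span (lcs L 2 \<inter> lgr L q)" unfolding V.span_Un by blast
      have wsub: "V.subspace (lcs L 2 \<inter> lgr L q)" by (rule V.subspace_inter[OF lcs_sub sub_gr])
      have "w \<in> lcs L 2 \<inter> lgr L q" using uw(3) V.span_eq_iff[THEN iffD2, OF wsub] by simp
      then have w: "w \<in> lcs L 2" "w \<in> lgr L q" by auto
      have vsub: "v ` {i\<in>J. d i = q} \<subseteq> car L" using vJ gr_car by blast
      have ucar: "u \<in> car L" using span_car[OF vsub] uw(2) by blast
      have wcar: "w \<in> car L" using w gr_car by blast
      have bcar: "b \<in> car L" using ab gr_car by blast
      have e: "lbr L a b = lbr L u b + lbr L w b" using uw(1) br_add_left ucar wcar bcar by simp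
      have 1: "lbr L u b \<in> V.span ?S"
      proof -
        have "lbr L u b \<in> V.span {lbr L s b | s. s \<in> v ` {i\<in>J. d i = q}}"
          by (rule br_span_left[OF vsub bcar uw(2)])
        moreover have "{lbr L s b | s. s \<in> v ` {i\<in>J. d i = q}} \<subseteq> ?S"
        proof
          fix z assume "z \<in> {lbr L s b | s. s \<in> v ` {i\<in>J. d i = q}}"
          then obtain i where i: "z = lbr L (v i) b" "i \<in> J" "d i = q" by blast
          have "p - d i = r" using qr i(3) by arith
          then have "b \<in> lcs L (Suc k) \<inter> lgr L (p - d i)" using ab by simp
          then show "z \<in> ?S" using i by (intro CollectI exI[of _ i] exI[of _ b]) simp
        qed
        ultimately show ?thesis using V.span_mono by blast
      qed
      have 2: "lbr L w b \<in> ?R"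
      proof
        show "lbr L w b \<in> lcs L (Suc (Suc (Suc k)))" using jac2[OF w(1) ab(3)] .
        show "lbr L w b \<in> lgr L p" using br_grade[OF w(2) ab(4)] qr by simp
      qed
      have h1: "lbr L u b \<in> V.span (?S \<union> ?R)"
        by (rule V.span_mono[of ?S "?S \<union> ?R", OF Un_upper1, THEN subsetD, OF 1])
      have h2: "lbr L w b \<in> V.span (?S \<union> ?R)"
        by (rule V.span_superset[THEN subsetD, OF UnI2, OF 2])
      show ?thesis unfolding ab(1) e by (rule V.span_add[OF h1 h2])
    qed
  qed
  then show "x \<in> V.span (?S \<union> ?R)" using xs V.span_minimal[OF _ V.subspace_span] by blast
qed

lemma KL:
  fixes J :: "'j set" and d :: "'j \<Rightarrow> nat" and v :: "'j \<Rightarrow> 'a"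
  assumes nil: "lcs L N = {0}"
    and vJ: "\<forall>i\<in>J. v i \<in> lgr L (d i)"
    and gen: "\<forall>q\<le>p. lgr L q \<subseteq> V.span (v ` {i\<in>J. d i = q} \<union> (lcs L 2 \<inter> lgr L q))"
  shows "lcs L (Suc (Suc k)) \<inter> lgr L p \<subseteq>
     V.span {lbr L (v i) m | i m. i \<in> J \<and> m \<in> lcs L (Suc k) \<inter> lgr L (p - d i)}"
proof -
  define S where "S j = {lbr L (v i) m | i m. i \<in> J \<and> m \<in> lcs L j \<inter> lgr L (p - d i)}" for j
  have Smono: "S j \<subseteq> S (Suc k)" if "Suc k \<le> j" for j
  proof
    fix z assume "z \<in> S j"
    then obtain i m where "z = lbr L (v i) m" "i \<in> J" "m \<in> lcs L j" "m \<in> lgr L (p - d i)"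
      unfolding S_def by blast
    moreover have "m \<in> lcs L (Suc k)" using lcs_antimono[OF that] calculation(3) by blast
    ultimately show "z \<in> S (Suc k)" unfolding S_def by (intro CollectI exI[of _ i] exI[of _ m]) auto
  qed
  have main: "lcs L (Suc (Suc k)) \<inter> lgr L p \<subseteq> V.span (S (Suc k) \<union> (lcs L n \<inter> lgr L p))"
    if "Suc (Suc k) \<le> n" for n
    using that
  proof (induction n rule: dec_induct)
    case base
    have "lcs L (Suc (Suc k)) \<inter> lgr L p \<subseteq> S (Suc k) \<union> (lcs L (Suc (Suc k)) \<inter> lgr L p)" by (rule Un_upper2)
    then show ?case using V.span_superset[of "S (Suc k) \<union> (lcs L (Suc (Suc k)) \<inter> lgr L p)"] by (rule order_trans)
  next
    case (step n)
    define n' where "n' = n - 2"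
    have n': "n = Suc (Suc n')" using step(1) by (simp add: n'_def)
    have A: "lcs L n \<inter> lgr L p \<subseteq> V.span (S (Suc n') \<union> (lcs L (Suc n) \<inter> lgr L p))"
      using KL_step[OF vJ gen, of n'] n' unfolding S_def by simp
    have "Suc k \<le> Suc n'" using step(1) n' by simp
    then have B: "S (Suc n') \<subseteq> S (Suc k)" by (rule Smono)
    have "V.span (S (Suc n') \<union> (lcs L (Suc n) \<inter> lgr L p)) \<subseteq> V.span (S (Suc k) \<union> (lcs L (Suc n) \<inter> lgr L p))"
      by (rule V.span_mono) (use B in blast)
    with A have "lcs L n \<inter> lgr L p \<subseteq> V.span (S (Suc k) \<union> (lcs L (Suc n) \<inter> lgr L p))"
      by (rule order_trans)
    then show ?case using step(3) span_trans_un by blast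
  qed
  define n where "n = max N (Suc (Suc k))"
  have 1: "lcs L (Suc (Suc k)) \<inter> lgr L p \<subseteq> V.span (S (Suc k) \<union> (lcs L n \<inter> lgr L p))"
    using main[of n] by (simp add: n_def)
  have "lcs L n \<subseteq> {0}" using lcs_antimono[of N n] nil by (simp add: n_def)
  then have "lcs L n \<inter> lgr L p \<subseteq> V.span (S (Suc k) \<union> {})" using V.span_zero by blast
  then have "S (Suc k) \<union> (lcs L n \<inter> lgr L p) \<subseteq> V.span (S (Suc k) \<union> {})" using V.span_superset by blast
  then have "V.span (S (Suc k) \<union> (lcs L n \<inter> lgr L p)) \<subseteq> V.span (S (Suc k))"
    using V.span_minimal[OF _ V.subspace_span] by simp
  then show ?thesis using 1 unfolding S_def by blast
qed

end


locale ghom = L: gl L + M: gl M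
  for L :: "('a::ab_group_add, 'm) glie_scheme" and M :: "('b::ab_group_add, 'n) glie_scheme" +
  fixes f :: "'a \<Rightarrow> 'b"
  assumes hom: "lie_hom L M f" and surj: "f ` car L = car M"
begin

lemma f_car: "x \<in> car L \<Longrightarrow> f x \<in> car M"
  using hom unfolding lie_hom_def by blast
lemma f_add: "x \<in> car L \<Longrightarrow> y \<in> car L \<Longrightarrow> f (x + y) = f x + f y"
  using hom unfolding lie_hom_def by blast
lemma f_br: "x \<in> car L \<Longrightarrow> y \<in> car L \<Longrightarrow> f (lbr L x y) = lbr M (f x) (f y)"
  using hom unfolding lie_hom_def by blast
lemma f_scale: "x \<in> car L \<Longrightarrow> f (lsc L c x) = lsc M c (f x)"
  using hom unfolding lie_hom_def by blast
lemma f_gr: "x \<in> lgr L p \<Longrightarrow> f x \<in> lgr M p"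
  using hom unfolding lie_hom_def by blast
lemma f_zero[simp]: "f 0 = 0"
proof -
  have "f (0 + 0) = f 0 + f 0" using f_add L.zero_car by blast
  then show ?thesis by simp
qed
lemma f_diff: "x \<in> car L \<Longrightarrow> y \<in> car L \<Longrightarrow> f (x - y) = f x - f y"
proof -
  assume a: "x \<in> car L" "y \<in> car L"
  have "f ((x - y) + y) = f (x - y) + f y" using a by (intro f_add L.car_diff)
  then show ?thesis by (simp add: eq_diff_eq)
qed
lemma f_sum: "finite I \<Longrightarrow> (\<forall>i\<in>I. g i \<in> car L) \<Longrightarrow> f (\<Sum>i\<in>I. g i) = (\<Sum>i\<in>I. f (g i))"
proof (induction I rule: finite_induct)
  case empty then show ?case by simp
next
  case (insert a F)
  have "(\<Sum>i\<in>F. g i) \<in> car L" using insert by (intro L.V.subspace_sum[OF L.car_sub]) auto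
  then show ?case using insert by (simp add: f_add)
qed

lemma f_span: assumes S: "S \<subseteq> car L" shows "f ` L.V.span S = M.V.span (f ` S)"
proof
  show "f ` L.V.span S \<subseteq> M.V.span (f ` S)"
  proof
    fix y assume "y \<in> f ` L.V.span S"
    then obtain x where x: "x \<in> L.V.span S" "y = f x" by blast
    have "x \<in> car L \<and> f x \<in> M.V.span (f ` S)" using x(1)
    proof (induction rule: L.V.span_induct_alt)
      case base then show ?case by (simp add: M.V.span_zero)
    next
      case (step c a z)
      have a: "a \<in> car L" using step S by auto
      have "f (lsc L c a + z) = lsc M c (f a) + f z"
        using a step by (simp add: f_add L.car_scale f_scale)
      moreover have "f a \<in> M.V.span (f ` S)" using step by (auto intro: M.V.span_base)
      ultimately show ?case using step a
        by (auto intro!: M.V.span_add M.V.span_scale L.car_add L.car_scale)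
    qed
    then show "y \<in> M.V.span (f ` S)" using x by blast
  qed
  show "M.V.span (f ` S) \<subseteq> f ` L.V.span S"
  proof
    fix y assume "y \<in> M.V.span (f ` S)"
    then show "y \<in> f ` L.V.span S"
    proof (induction rule: M.V.span_induct_alt)
      case base
      have "f 0 = 0" by simp
      then show ?case using L.V.span_zero by (metis image_eqI)
    next
      case (step c a z)
      then obtain s x where sx: "s \<in> S" "a = f s" "x \<in> L.V.span S" "z = f x" by blast
      have sc: "s \<in> car L" "x \<in> car L" using sx S L.span_car[OF S] by auto
      have "f (lsc L c s + x) = f (lsc L c s) + f x" using sc by (intro f_add L.car_scale)
      then have "lsc M c a + z = f (lsc L c s + x)" using sx sc f_scale by simp
      moreover have "lsc L c s + x \<in> L.V.span S"
        by (rule L.V.span_add[OF L.V.span_scale[OF L.V.span_base[OF sx(1)]] sx(3)])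
      ultimately show ?case by blast
    qed
  qed
qed

lemma f_ibr: "f ` ibr L k = ibr M k"
proof -
  have "f ` ibr L (Suc k) = ibr M (Suc k)" for k
  proof (induction k)
    case 0 then show ?case using surj by simp
  next
    case (Suc k)
    show ?case
    proof
      show "f ` ibr L (Suc (Suc k)) \<subseteq> ibr M (Suc (Suc k))"
      proof
        fix z assume "z \<in> f ` ibr L (Suc (Suc k))"
        then obtain x y where xy: "z = f (lbr L x y)" "x \<in> car L" "y \<in> ibr L (Suc k)" by auto
        have "y \<in> car L" using xy L.ibr_car by blast
        then have "z = lbr M (f x) (f y)" using xy f_br by simp
        moreover have "f x \<in> car M" using f_car xy by blast
        moreover have "f y \<in> ibr M (Suc k)" using Suc xy by blast
        ultimately show "z \<in> ibr M (Suc (Suc k))" by auto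
      qed
      show "ibr M (Suc (Suc k)) \<subseteq> f ` ibr L (Suc (Suc k))"
      proof
        fix z assume "z \<in> ibr M (Suc (Suc k))"
        then obtain x' y' where xy: "z = lbr M x' y'" "x' \<in> car M" "y' \<in> ibr M (Suc k)" by auto
        obtain x where x: "x \<in> car L" "x' = f x" using xy surj by blast
        obtain y where y: "y \<in> ibr L (Suc k)" "y' = f y" using xy Suc by blast
        have "y \<in> car L" using y L.ibr_car by blast
        then have "z = f (lbr L x y)" using xy x y f_br by simp
        moreover have "lbr L x y \<in> ibr L (Suc (Suc k))" using x y by auto
        ultimately show "z \<in> f ` ibr L (Suc (Suc k))" by blast
      qed
    qed
  qed
  then show ?thesis using surj by (cases k) auto
qed

lemma f_lcs: "f ` lcs L k = lcs M k"
  unfolding lcs_def using f_span[OF L.ibr_car] f_ibr by simp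

lemma f_graded:
  assumes H: "H \<subseteq> L.hom" and x: "x \<in> L.V.span H" and fx: "f x \<in> lgr M p"
  shows "\<exists>x'\<in>L.V.span H \<inter> lgr L p. f x' = f x"
proof -
  obtain n xs where d: "\<forall>q. xs q \<in> L.V.span (H \<inter> lgr L q)" "\<forall>q\<ge>n. xs q = 0" "x = (\<Sum>q<n. xs q)"
    using L.decomp[OF H x] by blast
  have sg: "xs q \<in> lgr L q" for q
  proof -
    have "L.V.span (H \<inter> lgr L q) \<subseteq> lgr L q" by (rule L.V.span_minimal[OF _ L.sub_gr]) auto
    then show ?thesis using d(1) by blast
  qed
  have sH: "xs q \<in> L.V.span H" for q
    using d(1) L.V.span_mono[of "H \<inter> lgr L q" H] by blast
  define N where "N = max n (Suc p)"
  have "f x = (\<Sum>q<n. f (xs q))" unfolding d(3) by (rule f_sum) (use sg L.gr_car in auto)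
  also have "\<dots> = (\<Sum>q<N. f (xs q))" using d(2) by (intro sum_ext_zero[symmetric]) (auto simp: N_def)
  finally have s1: "(\<Sum>q<N. f (xs q)) = f x" by simp
  have s2: "(\<Sum>q<N. (if q = p then f x else 0)) = f x" by (simp add: N_def less_max_iff_disj)
  have "(\<lambda>q. f (xs q)) p = (\<lambda>q. if q = p then f x else 0) p"
  proof (rule M.unique[where n=N and a="\<lambda>q. f (xs q)" and b="\<lambda>q. if q = p then f x else 0" and q=p])
    show "\<forall>q<N. (if q = p then f x else 0) \<in> lgr M q" using fx by auto
    show "\<forall>q<N. f (xs q) \<in> lgr M q" using sg f_gr by blast
    show "(\<Sum>q<N. f (xs q)) = (\<Sum>q<N. (if q = p then f x else 0))" using s1 s2 by simp
  qed (simp add: N_def)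
  then have "f (xs p) = f x" by simp
  then show ?thesis using sg sH by blast
qed

lemma f_gr_surj: "f ` lgr L p = lgr M p"
proof
  show "f ` lgr L p \<subseteq> lgr M p" using f_gr by blast
  show "lgr M p \<subseteq> f ` lgr L p"
  proof
    fix y assume y: "y \<in> lgr M p"
    then obtain x where x: "x \<in> car L" "y = f x" using surj M.gr_car by blast
    have "x \<in> L.V.span L.hom" using x L.car_span_hom by simp
    then obtain x' where "x' \<in> L.V.span L.hom \<inter> lgr L p" "f x' = f x"
      using f_graded[OF subset_refl] y x by blast
    then show "y \<in> f ` lgr L p" using x by (metis IntD2 image_eqI)
  qed
qed

lemma f_lcs_gr: "f ` (lcs L k \<inter> lgr L p) = lcs M k \<inter> lgr M p"
proof
  show "f ` (lcs L k \<inter> lgr L p) \<subseteq> lcs M k \<inter> lgr M p" using f_gr f_lcs by blast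
  show "lcs M k \<inter> lgr M p \<subseteq> f ` (lcs L k \<inter> lgr L p)"
  proof
    fix y assume y: "y \<in> lcs M k \<inter> lgr M p"
    then obtain x where x: "x \<in> lcs L k" "y = f x" using f_lcs by blast
    have H: "lcs L k \<inter> L.hom \<subseteq> L.hom" by blast
    have "x \<in> L.V.span (lcs L k \<inter> L.hom)" using x L.lcs_homog by blast
    then obtain x' where x': "x' \<in> L.V.span (lcs L k \<inter> L.hom) \<inter> lgr L p" "f x' = f x"
      using f_graded[OF H] y x by blast
    have "L.V.span (lcs L k \<inter> L.hom) \<subseteq> lcs L k"
      by (rule L.V.span_minimal[OF _ L.lcs_sub]) blast
    then have "x' \<in> lcs L k \<inter> lgr L p" using x' by blast
    then show "y \<in> f ` (lcs L k \<inter> lgr L p)" using x x' by (metis image_eqI)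
  qed
qed

end


lemma (in vector_space) sub_dim_eq:
  assumes S: "subspace S" and ST: "S \<subseteq> T" and TB: "T \<subseteq> span B" and B: "finite B"
    and d: "dim T \<le> dim S"
  shows "T \<subseteq> S"
proof
  fix t assume t: "t \<in> T"
  show "t \<in> S"
  proof (rule ccontr)
    assume tS: "t \<notin> S"
    obtain b where b: "b \<subseteq> S" "independent b" "S \<subseteq> span b"
      using maximal_independent_subset[of S] by blast
    have cb: "card b = dim S" using basis_card_eq_dim[OF b(1) b(3) b(2)] .
    have fb: "finite b" using independent_span_bound[OF B b(2)] b(1) ST TB by blast
    have "span b \<subseteq> S" using b(1) S span_minimal by blast
    then have tnb: "t \<notin> span b" using tS by blast
    have ind: "independent (insert t b)" by (rule independent_insertI[OF tnb b(2)])
    obtain c where c: "c \<subseteq> T" "independent c" "T \<subseteq> span c" "card c = dim T"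
      using basis_exists[of T] by blast
    have fc: "finite c" using independent_span_bound[OF B c(2)] c(1) TB by blast
    have "insert t b \<subseteq> span c" using t b(1) ST c(3) by blast
    then have "card (insert t b) \<le> card c" using independent_span_bound[OF fc ind] by blast
    moreover have "t \<notin> b" using tS b(1) by blast
    ultimately have "dim S + 1 \<le> dim T" using fb cb c(4) by simp
    then show False using d by simp
  qed
qed

lemma chain_fin:
  assumes C: "subset.chain P C" "C \<noteq> {}" and G: "finite G" "G \<subseteq> \<Union>C"
  shows "\<exists>F\<in>C. G \<subseteq> F"
  using G
proof (induction G rule: finite_induct)
  case empty then show ?case using C(2) by blast
next
  case (insert x G)
  then obtain F1 where F1: "F1 \<in> C" "x \<in> F1" by blast
  from insert obtain F2 where F2: "F2 \<in> C" "G \<subseteq> F2" by blast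
  have "F1 \<subseteq> F2 \<or> F2 \<subseteq> F1" using C(1) F1 F2 unfolding subset_chain_def by blast
  then show ?case using F1 F2 by blast
qed

lemma CL:
  fixes sY :: "rat \<Rightarrow> 'y::ab_group_add \<Rightarrow> 'y" and Y :: "'y set"
    and sZ :: "'i \<Rightarrow> rat \<Rightarrow> 'z::ab_group_add \<Rightarrow> 'z" and R :: "'i \<Rightarrow> 'y \<Rightarrow> 'z"
    and S :: "'i \<Rightarrow> 'y set" and A :: "'i set"
  assumes vY: "vector_space sY" and subY: "module.subspace sY Y"
    and vZ: "\<And>\<beta>. \<beta>\<in>A \<Longrightarrow> vector_space (sZ \<beta>)"
    and Radd: "\<And>\<beta> a b. \<beta>\<in>A \<Longrightarrow> a\<in>Y \<Longrightarrow> b\<in>Y \<Longrightarrow> R \<beta> (a + b) = R \<beta> a + R \<beta> b"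
    and Rsc: "\<And>\<beta> a c. \<beta>\<in>A \<Longrightarrow> a\<in>Y \<Longrightarrow> R \<beta> (sY c a) = sZ \<beta> c (R \<beta> a)"
    and fin: "\<And>\<beta>. \<beta>\<in>A \<Longrightarrow> \<exists>B. finite B \<and> R \<beta> ` Y \<subseteq> module.span (sZ \<beta>) B"
    and LP: "\<And>z. \<forall>\<alpha>\<in>A. \<forall>\<beta>\<in>A. \<exists>y\<in>Y. R \<alpha> y = z \<alpha> \<and> R \<beta> y = z \<beta> \<Longrightarrow> \<exists>y\<in>Y. \<forall>\<beta>\<in>A. R \<beta> y = z \<beta>"
    and Ane: "A \<noteq> {}"
    and Saff: "\<And>\<alpha>. \<alpha>\<in>A \<Longrightarrow> S \<alpha> \<subseteq> Y \<and> S \<alpha> \<noteq> {} \<and> (\<forall>a\<in>S \<alpha>. \<forall>b\<in>S \<alpha>. \<forall>c\<in>S \<alpha>. \<forall>t. a + sY t (b - c) \<in> S \<alpha>)"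
    and Ssat: "\<And>\<alpha> a b. \<alpha>\<in>A \<Longrightarrow> a \<in> S \<alpha> \<Longrightarrow> b \<in> Y \<Longrightarrow> R \<alpha> a = R \<alpha> b \<Longrightarrow> b \<in> S \<alpha>"
    and Sdir: "\<And>\<alpha> \<beta>. \<alpha>\<in>A \<Longrightarrow> \<beta>\<in>A \<Longrightarrow> \<exists>\<gamma>\<in>A. S \<gamma> \<subseteq> S \<alpha> \<inter> S \<beta>"
  shows "\<exists>y\<in>Y. \<forall>\<alpha>\<in>A. y \<in> S \<alpha>"
proof -
  interpret Y: vector_space sY by (rule vY)
  have Ydiff: "a - b \<in> Y" if "a \<in> Y" "b \<in> Y" for a b using Y.subspace_diff[OF subY that] .
  have Yadd: "a + b \<in> Y" if "a \<in> Y" "b \<in> Y" for a b using Y.subspace_add[OF subY that] .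
  have Ysc: "sY c a \<in> Y" if "a \<in> Y" for a c using Y.subspace_scale[OF subY that] .
  have Y0: "0 \<in> Y" using Y.subspace_0[OF subY] .
  have Rdiff: "R \<beta> (a - b) = R \<beta> a - R \<beta> b" if "\<beta> \<in> A" "a \<in> Y" "b \<in> Y" for \<beta> a b
  proof -
    have "R \<beta> ((a - b) + b) = R \<beta> (a - b) + R \<beta> b" using Radd[OF that(1) Ydiff[OF that(2,3)] that(3)] .
    then show ?thesis by (simp add: eq_diff_eq)
  qed
  define aff where "aff C \<longleftrightarrow> C \<subseteq> Y \<and> C \<noteq> {} \<and> (\<forall>a\<in>C. \<forall>b\<in>C. \<forall>c\<in>C. \<forall>t. a + sY t (b - c) \<in> C)" for C
  define sat where "sat \<beta> C \<longleftrightarrow> (\<forall>a\<in>C. \<forall>b\<in>Y. R \<beta> a = R \<beta> b \<longrightarrow> b \<in> C)" for \<beta> C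
  define CA where "CA C \<longleftrightarrow> aff C \<and> (\<exists>\<beta>\<in>A. sat \<beta> C)" for C
  define fip where "fip F \<longleftrightarrow> (\<forall>G\<subseteq>F. finite G \<longrightarrow> Y \<inter> \<Inter>G \<noteq> {})" for F
  define P where "P = {F. F \<subseteq> Collect CA \<and> S ` A \<subseteq> F \<and> fip F}"
  define dirR where "dirR \<beta> D = {R \<beta> a - R \<beta> b | a b. a \<in> D \<and> b \<in> D}" for \<beta> D

  have dir_sub: "module.subspace (sZ \<beta>) (dirR \<beta> D)" if b: "\<beta> \<in> A" and D: "aff D" for \<beta> D
  proof -
    interpret Z: vector_space "sZ \<beta>" by (rule vZ[OF b])
    have DY: "D \<subseteq> Y" "D \<noteq> {}" and Da: "\<And>a b c t. a\<in>D \<Longrightarrow> b\<in>D \<Longrightarrow> c\<in>D \<Longrightarrow> a + sY t (b - c) \<in> D"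
      using D unfolding aff_def by blast+
    show ?thesis
    proof (rule Z.subspaceI)
      obtain a where a: "a \<in> D" using DY by blast
      have "0 = R \<beta> a - R \<beta> a" by simp
      then show "0 \<in> dirR \<beta> D" unfolding dirR_def using a by blast
    next
      fix x y assume "x \<in> dirR \<beta> D" "y \<in> dirR \<beta> D"
      then obtain a b c d where abcd: "x = R \<beta> a - R \<beta> b" "a \<in> D" "b \<in> D"
        "y = R \<beta> c - R \<beta> d" "c \<in> D" "d \<in> D" unfolding dirR_def by blast
      have e: "a + sY 1 (c - d) \<in> D" using Da abcd by blast
      have Y3: "a \<in> Y" "b \<in> Y" "c \<in> Y" "d \<in> Y" using abcd DY by auto
      have "R \<beta> (a + sY 1 (c - d)) = R \<beta> a + (R \<beta> c - R \<beta> d)"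
        using Radd[OF b Y3(1) Ydiff[OF Y3(3,4)]] Rdiff[OF b Y3(3,4)] by simp
      moreover have "x + y = (R \<beta> a + (R \<beta> c - R \<beta> d)) - R \<beta> b" unfolding abcd(1,4) by (simp add: algebra_simps)
      ultimately have "x + y = R \<beta> (a + sY 1 (c - d)) - R \<beta> b" by simp
      then show "x + y \<in> dirR \<beta> D" unfolding dirR_def using e abcd by blast
    next
      fix t x assume "x \<in> dirR \<beta> D"
      then obtain a b where ab: "x = R \<beta> a - R \<beta> b" "a \<in> D" "b \<in> D" unfolding dirR_def by blast
      have e: "b + sY t (a - b) \<in> D" using Da ab by blast
      have Y2: "a \<in> Y" "b \<in> Y" using ab DY by auto
      have "R \<beta> (b + sY t (a - b)) = R \<beta> b + sZ \<beta> t (R \<beta> a - R \<beta> b)"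
        using Radd[OF b Y2(2) Ysc[OF Ydiff[OF Y2(1,2)]]] Rsc[OF b Ydiff[OF Y2(1,2)]] Rdiff[OF b Y2(1,2)] by simp
      then have "sZ \<beta> t x = R \<beta> (b + sY t (a - b)) - R \<beta> b" using ab by simp
      then show "sZ \<beta> t x \<in> dirR \<beta> D" unfolding dirR_def using e ab by blast
    qed
  qed

  have Sfin: "\<exists>\<gamma>\<in>A. S \<gamma> \<subseteq> \<Inter>G" if "finite G" "G \<subseteq> S ` A" for G
    using that
  proof (induction G rule: finite_induct)
    case empty then show ?case using Ane by blast
  next
    case (insert C G)
    then obtain \<gamma>0 where g0: "\<gamma>0 \<in> A" "S \<gamma>0 \<subseteq> \<Inter>G" by blast
    obtain \<alpha> where a: "\<alpha> \<in> A" "C = S \<alpha>" using insert by blast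
    obtain \<gamma> where "\<gamma> \<in> A" "S \<gamma> \<subseteq> S \<alpha> \<inter> S \<gamma>0" using Sdir[OF a(1) g0(1)] by blast
    then show ?case using g0 a by blast
  qed

  have SP: "S ` A \<in> P"
  proof -
    have "S ` A \<subseteq> Collect CA"
    proof
      fix C assume "C \<in> S ` A"
      then obtain \<alpha> where a: "\<alpha> \<in> A" "C = S \<alpha>" by blast
      have "aff C" using Saff[OF a(1)] a(2) unfolding aff_def by blast
      moreover have "sat \<alpha> C" unfolding sat_def a(2) using Ssat[OF a(1)] by blast
      ultimately show "C \<in> Collect CA" unfolding CA_def using a by blast
    qed
    moreover have "fip (S ` A)"
      unfolding fip_def
    proof (intro allI impI)
      fix G assume G: "G \<subseteq> S ` A" "finite G"
      then obtain \<gamma> where g: "\<gamma> \<in> A" "S \<gamma> \<subseteq> \<Inter>G" using Sfin[OF G(2) G(1)] by blast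
      have "S \<gamma> \<subseteq> Y" "S \<gamma> \<noteq> {}" using Saff[OF g(1)] by auto
      then show "Y \<inter> \<Inter>G \<noteq> {}" using g(2) by blast
    qed
    ultimately show ?thesis unfolding P_def by blast
  qed

  have "\<exists>M\<in>P. \<forall>X\<in>P. M \<subseteq> X \<longrightarrow> X = M"
  proof (rule subset_Zorn)
    fix C assume C: "subset.chain P C"
    show "\<exists>U\<in>P. \<forall>X\<in>C. X \<subseteq> U"
    proof (cases "C = {}")
      case True then show ?thesis using SP by blast
    next
      case False
      have CP: "C \<subseteq> P" using C unfolding subset_chain_def by blast
      have "\<Union>C \<in> P"
      proof -
        have "\<Union>C \<subseteq> Collect CA" using CP unfolding P_def by blast
        moreover have "S ` A \<subseteq> \<Union>C" using CP False unfolding P_def by blast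
        moreover have "fip (\<Union>C)"
          unfolding fip_def
        proof (intro allI impI)
          fix G assume G: "G \<subseteq> \<Union>C" "finite G"
          then obtain F where F: "F \<in> C" "G \<subseteq> F" using chain_fin[OF C False G(2) G(1)] by blast
          have "fip F" using F CP unfolding P_def by blast
          then show "Y \<inter> \<Inter>G \<noteq> {}" using F G unfolding fip_def by blast
        qed
        ultimately show ?thesis unfolding P_def by blast
      qed
      then show ?thesis by blast
    qed
  qed
  then obtain M where MP: "M \<in> P" and Mmax: "\<And>X. X \<in> P \<Longrightarrow> M \<subseteq> X \<Longrightarrow> X = M" by blast
  have MCA: "M \<subseteq> Collect CA" and SM: "S ` A \<subseteq> M" and Mfip: "fip M" using MP unfolding P_def by blast+

  define DD where "DD = {Y \<inter> \<Inter>G | G. G \<subseteq> M \<and> finite G}"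
  have DDaff: "aff D" if DD: "D \<in> DD" for D
  proof -
    obtain G where G: "D = Y \<inter> \<Inter>G" "G \<subseteq> M" "finite G" using DD unfolding DD_def by blast
    have "D \<noteq> {}" using Mfip G unfolding fip_def by blast
    moreover have "a + sY t (b - c) \<in> D" if "a \<in> D" "b \<in> D" "c \<in> D" for a b c t
    proof -
      have "a + sY t (b - c) \<in> Y" using that G by (auto intro!: Yadd Ysc Ydiff)
      moreover have "a + sY t (b - c) \<in> C" if C: "C \<in> G" for C
      proof -
        have "aff C" using C G MCA unfolding CA_def by blast
        then show ?thesis using C \<open>a \<in> D\<close> \<open>b \<in> D\<close> \<open>c \<in> D\<close> G unfolding aff_def by blast
      qed
      ultimately show ?thesis using G by blast
    qed
    ultimately show ?thesis unfolding aff_def G(1) by blast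
  qed
  have DDint: "D \<inter> D' \<in> DD" if DD: "D \<in> DD" "D' \<in> DD" for D D'
  proof -
    obtain G where G: "D = Y \<inter> \<Inter>G" "G \<subseteq> M" "finite G" using DD(1) unfolding DD_def by blast
    obtain G' where G': "D' = Y \<inter> \<Inter>G'" "G' \<subseteq> M" "finite G'" using DD(2) unfolding DD_def by blast
    have "D \<inter> D' = Y \<inter> \<Inter>(G \<union> G')" using G G' by blast
    moreover have "G \<union> G' \<subseteq> M" "finite (G \<union> G')" using G G' by auto
    ultimately show ?thesis unfolding DD_def by (intro CollectI exI[of _ "G \<union> G'"]) simp
  qed
  have YDD: "Y \<in> DD" unfolding DD_def by (rule CollectI, rule exI[of _ "{}"]) simp

  have fiber: "\<exists>yb\<in>Y. {b\<in>Y. R \<beta> b = R \<beta> yb} \<in> M" if b: "\<beta> \<in> A" for \<beta>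
  proof -
    interpret Z: vector_space "sZ \<beta>" by (rule vZ[OF b])
    obtain B where B: "finite B" "R \<beta> ` Y \<subseteq> Z.span B" using fin[OF b] by blast
    have dirB: "dirR \<beta> D \<subseteq> Z.span B" if "D \<subseteq> Y" for D
      unfolding dirR_def using that B(2) by (blast intro: Z.span_diff)
    obtain D0 where D0: "D0 \<in> DD" "\<forall>D. D \<in> DD \<longrightarrow> Z.dim (dirR \<beta> D0) \<le> Z.dim (dirR \<beta> D)"
      using ex_has_least_nat[of "\<lambda>D. D \<in> DD" Y "\<lambda>D. Z.dim (dirR \<beta> D)"] YDD by blast
    have aD0: "aff D0" using DDaff D0(1) .
    then obtain yb where yb: "yb \<in> D0" unfolding aff_def by blast
    have ybY: "yb \<in> Y" using aD0 yb unfolding aff_def by blast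
    define F where "F = {b\<in>Y. R \<beta> b = R \<beta> yb}"
    have CAF: "CA F"
    proof -
      have "F \<subseteq> Y" unfolding F_def by blast
      moreover have "yb \<in> F" unfolding F_def using ybY by simp
      moreover have "a + sY t (c - e) \<in> F" if "a \<in> F" "c \<in> F" "e \<in> F" for a c e t
      proof -
        have Y3: "a \<in> Y" "c \<in> Y" "e \<in> Y" using that unfolding F_def by auto
        have "R \<beta> (a + sY t (c - e)) = R \<beta> a + sZ \<beta> t (R \<beta> c - R \<beta> e)"
          using Radd[OF b Y3(1) Ysc[OF Ydiff[OF Y3(2,3)]]] Rsc[OF b Ydiff[OF Y3(2,3)]] Rdiff[OF b Y3(2,3)] by simp
        also have "\<dots> = R \<beta> yb" using that unfolding F_def by simp
        finally show ?thesis unfolding F_def using Y3 by (auto intro!: Yadd Ysc Ydiff)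
      qed
      moreover have "sat \<beta> F" unfolding sat_def F_def by simp
      ultimately show ?thesis unfolding CA_def aff_def using b by blast
    qed
    have meets: "Y \<inter> \<Inter>G \<inter> F \<noteq> {}" if G: "G \<subseteq> M" "finite G" for G
    proof -
      have D: "Y \<inter> \<Inter>G \<in> DD" unfolding DD_def using G by blast
      define D' where "D' = (Y \<inter> \<Inter>G) \<inter> D0"
      have D': "D' \<in> DD" unfolding D'_def using DDint[OF D D0(1)] .
      have aD': "aff D'" using DDaff[OF D'] .
      have sub: "dirR \<beta> D' \<subseteq> dirR \<beta> D0" unfolding dirR_def D'_def by blast
      have "dirR \<beta> D0 \<subseteq> dirR \<beta> D'"
      proof (rule Z.sub_dim_eq[OF dir_sub[OF b aD'] sub _ B(1)])
        show "dirR \<beta> D0 \<subseteq> Z.span B" using dirB aD0 unfolding aff_def by blast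
        show "Z.dim (dirR \<beta> D0) \<le> Z.dim (dirR \<beta> D')" using D0(2) D' by blast
      qed
      obtain d where d: "d \<in> D'" using aD' unfolding aff_def by blast
      have "R \<beta> yb - R \<beta> d \<in> dirR \<beta> D0" unfolding dirR_def using yb d D'_def by blast
      then have "R \<beta> yb - R \<beta> d \<in> dirR \<beta> D'" using \<open>dirR \<beta> D0 \<subseteq> dirR \<beta> D'\<close> by blast
      then obtain a c where ac: "R \<beta> yb - R \<beta> d = R \<beta> a - R \<beta> c" "a \<in> D'" "c \<in> D'"
        unfolding dirR_def by blast
      have e: "d + sY 1 (a - c) \<in> D'" using aD' d ac unfolding aff_def by blast
      have DY: "D' \<subseteq> Y" using aD' unfolding aff_def by blast
      have Y3: "d \<in> Y" "a \<in> Y" "c \<in> Y" using d ac DY by auto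
      have "R \<beta> (d + sY 1 (a - c)) = R \<beta> d + (R \<beta> a - R \<beta> c)"
        using Radd[OF b Y3(1) Ydiff[OF Y3(2,3)]] Rdiff[OF b Y3(2,3)] by simp
      also have "\<dots> = R \<beta> yb" using ac(1) by (simp add: algebra_simps)
      finally have "d + sY 1 (a - c) \<in> F" unfolding F_def using e DY by blast
      then show ?thesis using e unfolding D'_def by blast
    qed
    have "insert F M \<in> P"
    proof -
      have "insert F M \<subseteq> Collect CA" using CAF MCA by blast
      moreover have "S ` A \<subseteq> insert F M" using SM by blast
      moreover have "fip (insert F M)"
        unfolding fip_def
      proof (intro allI impI)
        fix G assume G: "G \<subseteq> insert F M" "finite G"
        show "Y \<inter> \<Inter>G \<noteq> {}"
        proof (cases "F \<in> G")
          case False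
          then have "G \<subseteq> M" using G by blast
          then show ?thesis using Mfip G unfolding fip_def by blast
        next
          case True
          have "G - {F} \<subseteq> M" "finite (G - {F})" using G by auto
          then have "Y \<inter> \<Inter>(G - {F}) \<inter> F \<noteq> {}" by (rule meets)
          moreover have "\<Inter>G = \<Inter>(G - {F}) \<inter> F" using True by blast
          ultimately show ?thesis by (simp add: Int_assoc)
        qed
      qed
      ultimately show ?thesis unfolding P_def by blast
    qed
    then have "insert F M = M" using Mmax by blast
    then show ?thesis using ybY unfolding F_def by blast
  qed
  then obtain yf where yf: "\<And>\<beta>. \<beta> \<in> A \<Longrightarrow> yf \<beta> \<in> Y \<and> {b\<in>Y. R \<beta> b = R \<beta> (yf \<beta>)} \<in> M"
    by metis
  define z where "z \<beta> = R \<beta> (yf \<beta>)" for \<beta>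
  have "\<exists>y\<in>Y. R \<alpha> y = z \<alpha> \<and> R \<beta> y = z \<beta>" if "\<alpha> \<in> A" "\<beta> \<in> A" for \<alpha> \<beta>
  proof -
    have "{{b\<in>Y. R \<alpha> b = R \<alpha> (yf \<alpha>)}, {b\<in>Y. R \<beta> b = R \<beta> (yf \<beta>)}} \<subseteq> M" using yf that by blast
    then have "Y \<inter> \<Inter>{{b\<in>Y. R \<alpha> b = R \<alpha> (yf \<alpha>)}, {b\<in>Y. R \<beta> b = R \<beta> (yf \<beta>)}} \<noteq> {}"
      using Mfip unfolding fip_def by blast
    then show ?thesis unfolding z_def by blast
  qed
  then obtain ys where ys: "ys \<in> Y" "\<And>\<beta>. \<beta> \<in> A \<Longrightarrow> R \<beta> ys = z \<beta>" using LP by blast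
  have "ys \<in> S \<alpha>" if a: "\<alpha> \<in> A" for \<alpha>
  proof -
    have "{S \<alpha>, {b\<in>Y. R \<alpha> b = R \<alpha> (yf \<alpha>)}} \<subseteq> M" using yf a SM by blast
    then have "Y \<inter> \<Inter>{S \<alpha>, {b\<in>Y. R \<alpha> b = R \<alpha> (yf \<alpha>)}} \<noteq> {}"
      using Mfip unfolding fip_def by blast
    then obtain y where y: "y \<in> S \<alpha>" "R \<alpha> y = R \<alpha> (yf \<alpha>)" by blast
    have "R \<alpha> y = R \<alpha> ys" using y ys a unfolding z_def by simp
    then show ?thesis using Ssat[OF a y(1) ys(1)] by blast
  qed
  then show ?thesis using ys by blast
qed


lemma vs_pw:
  assumes "vector_space s"
  shows "vector_space (\<lambda>c (y::'j \<Rightarrow> 'b::ab_group_add). \<lambda>j. s c (y j))"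
proof -
  interpret vector_space s by (rule assms)
  show ?thesis
    by (unfold_locales) (auto simp: fun_eq_iff scale_right_distrib scale_left_distrib)
qed

lemma sum_fun_apply: "finite J \<Longrightarrow> (\<Sum>j\<in>J. (f j :: 'i \<Rightarrow> 'b::comm_monoid_add)) i = (\<Sum>j\<in>J. f j i)"
  by (induction J rule: finite_induct) auto

lemma pw_span:
  assumes vs: "vector_space s" and J: "finite J"
    and y: "\<forall>j\<in>J. y j \<in> module.span s B" and y0: "\<forall>j. j \<notin> J \<longrightarrow> y j = 0"
  shows "y \<in> module.span (\<lambda>c (y::'j \<Rightarrow> 'b::ab_group_add). \<lambda>j. s c (y j))
              {(\<lambda>i. if i = j then b else 0) | j b. j \<in> J \<and> b \<in> B}"
proof -
  interpret S: vector_space s by (rule vs)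
  interpret P: vector_space "\<lambda>c (y::'j \<Rightarrow> 'b). \<lambda>j. s c (y j)" by (rule vs_pw[OF vs])
  define D where "D = {(\<lambda>i. if i = j then b else 0) | j b. j \<in> J \<and> b \<in> B}"
  have del: "(\<lambda>i. if i = j then x else 0) \<in> P.span D" if j: "j \<in> J" and x: "x \<in> S.span B" for j x
    using x
  proof (induction rule: S.span_induct_alt)
    case base
    have "(\<lambda>i. if i = j then (0::'b) else 0) = 0" by (simp add: fun_eq_iff)
    then show ?case using P.span_zero by simp
  next
    case (step c b z)
    have e: "(\<lambda>i. if i = j then s c b + z else 0)
          = (\<lambda>i. s c ((\<lambda>i. if i = j then b else 0) i)) + (\<lambda>i. if i = j then z else 0)"
      by (simp add: fun_eq_iff)
    have "(\<lambda>i. if i = j then b else 0) \<in> D" unfolding D_def using step j by blast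
    then have "(\<lambda>i. s c ((\<lambda>i. if i = j then b else 0) i)) \<in> P.span D"
      using P.span_scale[OF P.span_base, of _ D c] by simp
    then show ?case using P.span_add[OF _ step(2)] e by simp
  qed
  have "y = (\<Sum>j\<in>J. (\<lambda>i. if i = j then y j else 0))"
  proof
    fix i
    have "(\<Sum>j\<in>J. (\<lambda>i. if i = j then y j else 0)) i = (\<Sum>j\<in>J. (if i = j then y j else 0))"
      using sum_fun_apply[OF J] .
    also have "\<dots> = y i" using J y0 by (cases "i \<in> J") auto
    finally show "y i = (\<Sum>j\<in>J. (\<lambda>i. if i = j then y j else 0)) i" by simp
  qed
  also have "\<dots> \<in> P.span D" using del y by (intro P.span_sum) auto
  finally show ?thesis unfolding D_def .
qed

lemma coset_eq:
  fixes W :: "'a::ab_group_add set"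
  assumes W0: "0 \<in> W" and Wd: "\<And>u v. u \<in> W \<Longrightarrow> v \<in> W \<Longrightarrow> u - v \<in> W"
  shows "coset a W = coset b W \<longleftrightarrow> a - b \<in> W"
proof
  assume "coset a W = coset b W"
  then have "a + 0 \<in> coset b W" using W0 unfolding coset_def by blast
  then obtain w where "w \<in> W" "a = b + w" unfolding coset_def by auto
  then show "a - b \<in> W" by simp
next
  assume ab: "a - b \<in> W"
  have Wn: "- u \<in> W" if "u \<in> W" for u using Wd[OF W0 that] by simp
  have Wa: "u + v \<in> W" if "u \<in> W" "v \<in> W" for u v using Wd[OF that(1) Wn[OF that(2)]] by simp
  show "coset a W = coset b W"
  proof
    show "coset a W \<subseteq> coset b W"
    proof
      fix z assume "z \<in> coset a W"
      then obtain w where w: "w \<in> W" "z = a + w" unfolding coset_def by auto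
      have "z = b + ((a - b) + w)" using w by simp
      then show "z \<in> coset b W" unfolding coset_def using Wa[OF ab w(1)] by blast
    qed
    show "coset b W \<subseteq> coset a W"
    proof
      fix z assume "z \<in> coset b W"
      then obtain w where w: "w \<in> W" "z = b + w" unfolding coset_def by auto
      have "z = a + (- (a - b) + w)" using w by simp
      then show "z \<in> coset a W" unfolding coset_def using Wa[OF Wn[OF ab] w(1)] by blast
    qed
  qed
qed

locale ce = gl L for L :: "('a::ab_group_add) glie" +
  fixes A :: "'i set" and M :: "'i \<Rightarrow> ('b::ab_group_add) glie" and \<rho> :: "'i \<Rightarrow> 'a \<Rightarrow> 'b"
  assumes ce: "complete_enriched L A M \<rho>"
begin

lemma ce1: "\<forall>\<alpha>\<in>A. graded_lie (M \<alpha>) \<and> lie_hom L (M \<alpha>) (\<rho> \<alpha>) \<and> \<rho> \<alpha> ` car L = car (M \<alpha>) \<and>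
              fin_dim (M \<alpha>) \<and> nilpotent_lie (M \<alpha>)"
  using ce unfolding complete_enriched_def by (elim conjE) assumption
lemma ce2: "\<forall>\<alpha>\<in>A. \<forall>\<beta>\<in>A. \<exists>\<gamma>\<in>A. hom_ker L (\<rho> \<gamma>) \<subseteq> hom_ker L (\<rho> \<alpha>) \<inter> hom_ker L (\<rho> \<beta>)"
  using ce unfolding complete_enriched_def by (elim conjE) assumption
lemma ce3: "(\<Inter>\<alpha>\<in>A. hom_ker L (\<rho> \<alpha>)) = {0}"
  using ce unfolding complete_enriched_def by (elim conjE) assumption
lemma ce4: "\<forall>p. bij_betw (\<lambda>x. restrict (\<lambda>\<alpha>. \<rho> \<alpha> x) A) (lgr L p) (compat_families L A M \<rho> p)"
  using ce unfolding complete_enriched_def by (elim conjE) assumption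
lemma Ane: "A \<noteq> {}"
  using ce unfolding complete_enriched_def by (elim conjE) assumption

lemma Mgl: "\<alpha> \<in> A \<Longrightarrow> gl (M \<alpha>)"
  using ce1 unfolding gl_def by blast

lemma Mhom: "\<alpha> \<in> A \<Longrightarrow> ghom L (M \<alpha>) (\<rho> \<alpha>)"
proof -
  assume a: "\<alpha> \<in> A"
  have "lie_hom L (M \<alpha>) (\<rho> \<alpha>)" "\<rho> \<alpha> ` car L = car (M \<alpha>)"
    using ce1 a by blast+
  then show ?thesis using Mgl[OF a] gl_axioms unfolding ghom_def ghom_axioms_def by blast
qed

lemma Mnil: "\<alpha> \<in> A \<Longrightarrow> \<exists>N. lcs (M \<alpha>) N = {0}"
  using ce1 unfolding nilpotent_lie_def by blast

lemma Mfin: "\<alpha> \<in> A \<Longrightarrow> \<exists>B. finite B \<and> B \<subseteq> car (M \<alpha>) \<and> module.span (lsc (M \<alpha>)) B = car (M \<alpha>)"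
  using ce1 unfolding fin_dim_def by blast

lemma Kdir: "\<alpha> \<in> A \<Longrightarrow> \<beta> \<in> A \<Longrightarrow> \<exists>\<gamma>\<in>A. hom_ker L (\<rho> \<gamma>) \<subseteq> hom_ker L (\<rho> \<alpha>) \<inter> hom_ker L (\<rho> \<beta>)"
  using ce2 by blast

lemma Ksep: "x \<in> car L \<Longrightarrow> (\<forall>\<alpha>\<in>A. \<rho> \<alpha> x = 0) \<Longrightarrow> x = 0"
proof -
  assume x: "x \<in> car L" "\<forall>\<alpha>\<in>A. \<rho> \<alpha> x = 0"
  have "x \<in> (\<Inter>\<alpha>\<in>A. hom_ker L (\<rho> \<alpha>))" using x unfolding hom_ker_def by blast
  then show ?thesis using ce3 by blast
qed

lemma Kbij: "bij_betw (\<lambda>x. restrict (\<lambda>\<alpha>. \<rho> \<alpha> x) A) (lgr L p) (compat_families L A M \<rho> p)"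
  using ce4 by blast

lemma lift: "y \<in> compat_families L A M \<rho> p \<Longrightarrow> \<exists>x\<in>lgr L p. \<forall>\<alpha>\<in>A. \<rho> \<alpha> x = y \<alpha>"
proof -
  assume y: "y \<in> compat_families L A M \<rho> p"
  then obtain x where x: "x \<in> lgr L p" "restrict (\<lambda>\<alpha>. \<rho> \<alpha> x) A = y"
    using Kbij[of p] unfolding bij_betw_def by (metis (no_types, lifting) imageE)
  then have "\<forall>\<alpha>\<in>A. \<rho> \<alpha> x = y \<alpha>" by (metis restrict_apply')
  then show ?thesis using x by blast
qed

lemma Ktrans:
  assumes a: "\<alpha> \<in> A" and g: "\<gamma> \<in> A" and K: "hom_ker L (\<rho> \<gamma>) \<subseteq> hom_ker L (\<rho> \<alpha>)"
    and x: "x \<in> car L" "x' \<in> car L" and e: "\<rho> \<gamma> x = \<rho> \<gamma> x'"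
  shows "\<rho> \<alpha> x = \<rho> \<alpha> x'"
proof -
  interpret Ha: ghom L "M \<alpha>" "\<rho> \<alpha>" by (rule Mhom[OF a])
  interpret Hg: ghom L "M \<gamma>" "\<rho> \<gamma>" by (rule Mhom[OF g])
  have "x - x' \<in> hom_ker L (\<rho> \<gamma>)" unfolding hom_ker_def using x e Hg.f_diff car_diff by simp
  then have "\<rho> \<alpha> (x - x') = 0" using K unfolding hom_ker_def by blast
  then show ?thesis using Ha.f_diff[OF x] by simp
qed

lemma closure_iff: "x \<in> lcs_closure L A \<rho> k \<longleftrightarrow> x \<in> car L \<and> (\<forall>\<alpha>\<in>A. \<rho> \<alpha> x \<in> lcs (M \<alpha>) k)"
  unfolding lcs_closure_def using ghom.f_lcs[OF Mhom] by auto

end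


context ce begin

lemma lift_solve:
  fixes J :: "'j set" and d :: "'j \<Rightarrow> nat" and w :: "'j \<Rightarrow> 'a" and U :: "'j \<Rightarrow> 'a set"
  assumes J: "finite J" and w: "\<forall>j\<in>J. w j \<in> car L"
    and U: "\<forall>j\<in>J. V.subspace (U j) \<and> U j \<subseteq> lgr L (d j)"
    and Ucl: "\<forall>j\<in>J. \<forall>z\<in>lgr L (d j). (\<forall>\<beta>\<in>A. \<rho> \<beta> z \<in> \<rho> \<beta> ` U j) \<longrightarrow> z \<in> U j"
    and x: "x \<in> car L"
    and solv: "\<forall>\<alpha>\<in>A. \<exists>y. (\<forall>j\<in>J. y j \<in> U j) \<and> \<rho> \<alpha> (\<Sum>j\<in>J. lbr L (w j) (y j)) = \<rho> \<alpha> x"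
  shows "\<exists>y. (\<forall>j\<in>J. y j \<in> U j) \<and> (\<Sum>j\<in>J. lbr L (w j) (y j)) = x"
proof -
  define Y where "Y = {y. \<forall>j. (j \<in> J \<longrightarrow> y j \<in> U j) \<and> (j \<notin> J \<longrightarrow> y j = 0)}"
  define \<Phi> where "\<Phi> y = (\<Sum>j\<in>J. lbr L (w j) (y j))" for y
  define sY where "sY = (\<lambda>c (y::'j \<Rightarrow> 'a). \<lambda>j. lsc L c (y j))"
  define sZ where "sZ = (\<lambda>\<beta> c (z::'j \<Rightarrow> 'b). \<lambda>j. lsc (M \<beta>) c (z j))"
  define R where "R = (\<lambda>\<beta> (y::'j \<Rightarrow> 'a). \<lambda>j. \<rho> \<beta> (y j))"
  define S where "S = (\<lambda>\<alpha>. {y\<in>Y. \<rho> \<alpha> (\<Phi> y) = \<rho> \<alpha> x})"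
  have Ucar: "U j \<subseteq> car L" if "j \<in> J" for j using U that gr_car by blast
  have Ycar: "y j \<in> car L" if "y \<in> Y" for y j
    using that Ucar unfolding Y_def by (cases "j \<in> J") auto
  have YU: "y j \<in> U j" if "y \<in> Y" "j \<in> J" for y j using that unfolding Y_def by blast
  have Y0: "y j = 0" if "y \<in> Y" "j \<notin> J" for y j using that unfolding Y_def by blast
  have vY: "vector_space sY" unfolding sY_def by (rule vs_pw[OF V.vector_space_axioms])
  interpret PY: vector_space sY by (rule vY)
  have subY: "PY.subspace Y"
  proof (rule PY.subspaceI)
    show "0 \<in> Y" unfolding Y_def using U V.subspace_0 by auto
  next
    fix a b assume ab: "a \<in> Y" "b \<in> Y"
    show "a + b \<in> Y" unfolding Y_def using YU[OF ab(1)] YU[OF ab(2)] Y0[OF ab(1)] Y0[OF ab(2)] U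
      by (auto intro: V.subspace_add)
  next
    fix c a assume a: "a \<in> Y"
    show "sY c a \<in> Y" unfolding Y_def sY_def using YU[OF a] Y0[OF a] U
      by (auto intro: V.subspace_scale)
  qed
  have Yadd: "a + b \<in> Y" if "a \<in> Y" "b \<in> Y" for a b using PY.subspace_add[OF subY that] .
  have Ydiff: "a - b \<in> Y" if "a \<in> Y" "b \<in> Y" for a b using PY.subspace_diff[OF subY that] .
  have Ysc: "sY c a \<in> Y" if "a \<in> Y" for a c using PY.subspace_scale[OF subY that] .
  have Phicar: "\<Phi> y \<in> car L" if "y \<in> Y" for y
    unfolding \<Phi>_def using w Ycar[OF that] by (intro V.subspace_sum[OF car_sub] br_car) auto
  have Phiadd: "\<Phi> (a + b) = \<Phi> a + \<Phi> b" if "a \<in> Y" "b \<in> Y" for a b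
    unfolding \<Phi>_def sum.distrib[symmetric]
  proof (rule sum.cong)
    fix j assume j: "j \<in> J"
    show "lbr L (w j) ((a + b) j) = lbr L (w j) (a j) + lbr L (w j) (b j)"
      using br_add_right w j Ycar[OF that(1)] Ycar[OF that(2)] by simp
  qed simp
  have Phisc: "\<Phi> (sY c a) = lsc L c (\<Phi> a)" if "a \<in> Y" for a c
    unfolding \<Phi>_def sY_def V.scale_sum_right
  proof (rule sum.cong)
    fix j assume j: "j \<in> J"
    show "lbr L (w j) (lsc L c (a j)) = lsc L c (lbr L (w j) (a j))"
      using br_scale_right w j Ycar[OF that] by simp
  qed simp
  have Phidiff: "\<Phi> (a - b) = \<Phi> a - \<Phi> b" if "a \<in> Y" "b \<in> Y" for a b
  proof -
    have "\<Phi> ((a - b) + b) = \<Phi> (a - b) + \<Phi> b" using Phiadd[OF Ydiff[OF that] that(2)] .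
    then show ?thesis by (simp add: eq_diff_eq)
  qed
  have rhoPhi: "\<rho> \<alpha> (\<Phi> y) = (\<Sum>j\<in>J. lbr (M \<alpha>) (\<rho> \<alpha> (w j)) (\<rho> \<alpha> (y j)))" if a: "\<alpha> \<in> A" and y: "y \<in> Y" for \<alpha> y
  proof -
    interpret H: ghom L "M \<alpha>" "\<rho> \<alpha>" by (rule Mhom[OF a])
    have "\<rho> \<alpha> (\<Phi> y) = (\<Sum>j\<in>J. \<rho> \<alpha> (lbr L (w j) (y j)))"
      unfolding \<Phi>_def using w Ycar[OF y] by (intro H.f_sum[OF J]) (auto intro: br_car)
    also have "\<dots> = (\<Sum>j\<in>J. lbr (M \<alpha>) (\<rho> \<alpha> (w j)) (\<rho> \<alpha> (y j)))"
      using w Ycar[OF y] by (intro sum.cong) (auto intro: H.f_br)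
    finally show ?thesis .
  qed
  have vZ: "vector_space (sZ \<beta>)" if "\<beta> \<in> A" for \<beta>
  proof -
    interpret MB: gl "M \<beta>" by (rule Mgl[OF that])
    show ?thesis unfolding sZ_def by (rule vs_pw[OF MB.V.vector_space_axioms])
  qed
  have Radd: "R \<beta> (a + b) = R \<beta> a + R \<beta> b" if "\<beta> \<in> A" "a \<in> Y" "b \<in> Y" for \<beta> a b
  proof -
    interpret H: ghom L "M \<beta>" "\<rho> \<beta>" by (rule Mhom[OF that(1)])
    show ?thesis unfolding R_def using H.f_add Ycar that by (simp add: fun_eq_iff)
  qed
  have Rsc: "R \<beta> (sY c a) = sZ \<beta> c (R \<beta> a)" if "\<beta> \<in> A" "a \<in> Y" for \<beta> a c
  proof -
    interpret H: ghom L "M \<beta>" "\<rho> \<beta>" by (rule Mhom[OF that(1)])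
    show ?thesis unfolding R_def sY_def sZ_def using H.f_scale Ycar that by (simp add: fun_eq_iff)
  qed
  have fin: "\<exists>B. finite B \<and> R \<beta> ` Y \<subseteq> module.span (sZ \<beta>) B" if b: "\<beta> \<in> A" for \<beta>
  proof -
    interpret H: ghom L "M \<beta>" "\<rho> \<beta>" by (rule Mhom[OF b])
    obtain B where B: "finite B" "module.span (lsc (M \<beta>)) B = car (M \<beta>)" using Mfin[OF b] by blast
    define D where "D = {(\<lambda>i. if i = j then bb else 0) | j bb. j \<in> J \<and> bb \<in> B}"
    have "D = (\<lambda>(j, bb). (\<lambda>i. if i = j then bb else 0)) ` (J \<times> B)" unfolding D_def by auto
    then have fD: "finite D" using J B(1) by simp
    have "R \<beta> ` Y \<subseteq> module.span (sZ \<beta>) D"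
    proof
      fix z assume "z \<in> R \<beta> ` Y"
      then obtain y where y: "y \<in> Y" "z = R \<beta> y" by blast
      have "z \<in> module.span (\<lambda>c (y::'j \<Rightarrow> 'b). \<lambda>j. lsc (M \<beta>) c (y j)) D"
        unfolding D_def
      proof (rule pw_span[OF H.M.V.vector_space_axioms J])
        show "\<forall>j\<in>J. z j \<in> module.span (lsc (M \<beta>)) B"
          using y Ycar H.f_car B(2) unfolding R_def by simp
        show "\<forall>j. j \<notin> J \<longrightarrow> z j = 0" using y Y0[OF y(1)] unfolding R_def by simp
      qed
      then show "z \<in> module.span (sZ \<beta>) D" unfolding sZ_def .
    qed
    then show ?thesis using fD by blast
  qed
  have LP: "\<exists>y\<in>Y. \<forall>\<beta>\<in>A. R \<beta> y = z \<beta>"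
    if z: "\<forall>\<alpha>\<in>A. \<forall>\<beta>\<in>A. \<exists>y\<in>Y. R \<alpha> y = z \<alpha> \<and> R \<beta> y = z \<beta>" for z
  proof -
    have zz: "\<exists>y\<in>Y. R \<beta> y = z \<beta>" if "\<beta> \<in> A" for \<beta> using z that by blast
    have comp: "\<exists>xj\<in>lgr L (d j). \<forall>\<beta>\<in>A. \<rho> \<beta> xj = z \<beta> j" if j: "j \<in> J" for j
    proof -
      have "restrict (\<lambda>\<beta>. z \<beta> j) A \<in> compat_families L A M \<rho> (d j)"
        unfolding compat_families_def
      proof (intro CollectI conjI ballI impI)
        show "restrict (\<lambda>\<beta>. z \<beta> j) A \<in> extensional A" by simp
      next
        fix \<alpha> assume a: "\<alpha> \<in> A"
        interpret H: ghom L "M \<alpha>" "\<rho> \<alpha>" by (rule Mhom[OF a])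
        obtain y where y: "y \<in> Y" "R \<alpha> y = z \<alpha>" using zz[OF a] by blast
        have "y j \<in> lgr L (d j)" using YU[OF y(1) j] U j by blast
        then have "\<rho> \<alpha> (y j) \<in> lgr (M \<alpha>) (d j)" by (rule H.f_gr)
        then show "restrict (\<lambda>\<beta>. z \<beta> j) A \<alpha> \<in> lgr (M \<alpha>) (d j)"
          using y a unfolding R_def by (auto simp: fun_eq_iff)
      next
        fix \<alpha> \<beta> x' assume a: "\<alpha> \<in> A" and b: "\<beta> \<in> A"
          and K: "hom_ker L (\<rho> \<beta>) \<subseteq> hom_ker L (\<rho> \<alpha>)" and x': "x' \<in> car L"
          and e: "\<rho> \<beta> x' = restrict (\<lambda>\<beta>. z \<beta> j) A \<beta>"
        obtain y where y: "y \<in> Y" "R \<alpha> y = z \<alpha>" "R \<beta> y = z \<beta>" using z a b by blast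
        have "\<rho> \<beta> x' = \<rho> \<beta> (y j)" using e b y(3) unfolding R_def by (auto simp: fun_eq_iff)
        then have "\<rho> \<alpha> x' = \<rho> \<alpha> (y j)" using Ktrans[OF a b K x' Ycar[OF y(1)]] by simp
        then show "\<rho> \<alpha> x' = restrict (\<lambda>\<beta>. z \<beta> j) A \<alpha>" using a y(2) unfolding R_def by (auto simp: fun_eq_iff)
      qed
      then obtain xj where "xj \<in> lgr L (d j)" "\<forall>\<beta>\<in>A. \<rho> \<beta> xj = restrict (\<lambda>\<beta>. z \<beta> j) A \<beta>"
        using lift by blast
      then show ?thesis by auto
    qed
    then obtain xf where xf: "\<And>j. j \<in> J \<Longrightarrow> xf j \<in> lgr L (d j) \<and> (\<forall>\<beta>\<in>A. \<rho> \<beta> (xf j) = z \<beta> j)"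
      by metis
    define ys where "ys = (\<lambda>j. if j \<in> J then xf j else 0)"
    have ysU: "ys j \<in> U j" if j: "j \<in> J" for j
    proof -
      have "\<forall>\<beta>\<in>A. \<rho> \<beta> (xf j) \<in> \<rho> \<beta> ` U j"
      proof
        fix \<beta> assume b: "\<beta> \<in> A"
        obtain y where y: "y \<in> Y" "R \<beta> y = z \<beta>" using zz[OF b] by blast
        have "\<rho> \<beta> (xf j) = \<rho> \<beta> (y j)" using xf[OF j] b y(2) unfolding R_def by (auto simp: fun_eq_iff)
        then show "\<rho> \<beta> (xf j) \<in> \<rho> \<beta> ` U j" using YU[OF y(1) j] by blast
      qed
      then have "xf j \<in> U j" using Ucl j xf[OF j] by blast
      then show ?thesis using j unfolding ys_def by simp
    qed
    have "ys \<in> Y" unfolding Y_def using ysU by (auto simp: ys_def)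
    moreover have "R \<beta> ys = z \<beta>" if b: "\<beta> \<in> A" for \<beta>
    proof
      fix j
      interpret H: ghom L "M \<beta>" "\<rho> \<beta>" by (rule Mhom[OF b])
      obtain y where y: "y \<in> Y" "R \<beta> y = z \<beta>" using zz[OF b] by blast
      show "R \<beta> ys j = z \<beta> j"
      proof (cases "j \<in> J")
        case True then show ?thesis using xf b unfolding R_def ys_def by simp
      next
        case False
        have "z \<beta> j = \<rho> \<beta> (y j)" using y(2) unfolding R_def by (auto simp: fun_eq_iff)
        then show ?thesis using False Y0[OF y(1) False] unfolding R_def ys_def by simp
      qed
    qed
    ultimately show ?thesis by blast
  qed
  have Saff: "S \<alpha> \<subseteq> Y \<and> S \<alpha> \<noteq> {} \<and> (\<forall>a\<in>S \<alpha>. \<forall>b\<in>S \<alpha>. \<forall>c\<in>S \<alpha>. \<forall>t. a + sY t (b - c) \<in> S \<alpha>)"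
    if a: "\<alpha> \<in> A" for \<alpha>
  proof (intro conjI ballI allI)
    interpret H: ghom L "M \<alpha>" "\<rho> \<alpha>" by (rule Mhom[OF a])
    show "S \<alpha> \<subseteq> Y" unfolding S_def by blast
    obtain y where y: "\<forall>j\<in>J. y j \<in> U j" "\<rho> \<alpha> (\<Phi> y) = \<rho> \<alpha> x" using solv a unfolding \<Phi>_def by blast
    define y' where "y' = (\<lambda>j. if j \<in> J then y j else 0)"
    have y'Y: "y' \<in> Y" unfolding Y_def y'_def using y by auto
    have "\<Phi> y' = \<Phi> y" unfolding \<Phi>_def y'_def by (rule sum.cong) auto
    then have "y' \<in> S \<alpha>" unfolding S_def using y'Y y by simp
    then show "S \<alpha> \<noteq> {}" by blast
  next
    fix aa b c t assume abc: "aa \<in> S \<alpha>" "b \<in> S \<alpha>" "c \<in> S \<alpha>"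
    interpret H: ghom L "M \<alpha>" "\<rho> \<alpha>" by (rule Mhom[OF a])
    have Y3: "aa \<in> Y" "b \<in> Y" "c \<in> Y" using abc unfolding S_def by auto
    have e: "\<Phi> (aa + sY t (b - c)) = \<Phi> aa + lsc L t (\<Phi> b - \<Phi> c)"
      using Phiadd[OF Y3(1) Ysc[OF Ydiff[OF Y3(2,3)]]] Phisc[OF Ydiff[OF Y3(2,3)]] Phidiff[OF Y3(2,3)] by simp
    have "\<rho> \<alpha> (\<Phi> aa + lsc L t (\<Phi> b - \<Phi> c)) = \<rho> \<alpha> (\<Phi> aa) + lsc (M \<alpha>) t (\<rho> \<alpha> (\<Phi> b) - \<rho> \<alpha> (\<Phi> c))"
      using Phicar Y3 by (simp add: H.f_add H.f_scale H.f_diff car_scale car_diff)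
    also have "\<dots> = \<rho> \<alpha> x" using abc unfolding S_def by simp
    finally show "aa + sY t (b - c) \<in> S \<alpha>" unfolding S_def using e Yadd Ysc Ydiff Y3 by simp
  qed
  have Ssat: "b \<in> S \<alpha>" if "\<alpha> \<in> A" "aa \<in> S \<alpha>" "b \<in> Y" "R \<alpha> aa = R \<alpha> b" for \<alpha> aa b
  proof -
    have aY: "aa \<in> Y" using that(2) unfolding S_def by blast
    have "\<rho> \<alpha> (\<Phi> b) = \<rho> \<alpha> (\<Phi> aa)"
      using rhoPhi[OF that(1) aY] rhoPhi[OF that(1) that(3)] that(4) unfolding R_def by (simp add: fun_eq_iff)
    then show ?thesis using that unfolding S_def by simp
  qed
  have Sdir: "\<exists>\<gamma>\<in>A. S \<gamma> \<subseteq> S \<alpha> \<inter> S \<beta>" if ab: "\<alpha> \<in> A" "\<beta> \<in> A" for \<alpha> \<beta>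
  proof -
    obtain \<gamma> where g: "\<gamma> \<in> A" "hom_ker L (\<rho> \<gamma>) \<subseteq> hom_ker L (\<rho> \<alpha>) \<inter> hom_ker L (\<rho> \<beta>)"
      using Kdir[OF ab] by blast
    have "S \<gamma> \<subseteq> S \<alpha> \<inter> S \<beta>"
    proof
      fix y assume "y \<in> S \<gamma>"
      then have y: "y \<in> Y" "\<rho> \<gamma> (\<Phi> y) = \<rho> \<gamma> x" unfolding S_def by auto
      have "\<rho> \<alpha> (\<Phi> y) = \<rho> \<alpha> x" using Ktrans[OF ab(1) g(1) _ Phicar[OF y(1)] x y(2)] g(2) by blast
      moreover have "\<rho> \<beta> (\<Phi> y) = \<rho> \<beta> x" using Ktrans[OF ab(2) g(1) _ Phicar[OF y(1)] x y(2)] g(2) by blast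
      ultimately show "y \<in> S \<alpha> \<inter> S \<beta>" unfolding S_def using y by simp
    qed
    then show ?thesis using g by blast
  qed
  have "\<exists>y\<in>Y. \<forall>\<alpha>\<in>A. y \<in> S \<alpha>"
    by (rule CL[where sY=sY and Y=Y and sZ=sZ and R=R and S=S and A=A, OF vY subY vZ Radd Rsc fin LP Ane Saff Ssat Sdir])
  then obtain y where y: "y \<in> Y" "\<forall>\<alpha>\<in>A. y \<in> S \<alpha>" by blast
  have "\<Phi> y - x = 0"
  proof (rule Ksep)
    show "\<Phi> y - x \<in> car L" using Phicar[OF y(1)] x car_diff by blast
    show "\<forall>\<alpha>\<in>A. \<rho> \<alpha> (\<Phi> y - x) = 0"
    proof
      fix \<alpha> assume a: "\<alpha> \<in> A"
      interpret H: ghom L "M \<alpha>" "\<rho> \<alpha>" by (rule Mhom[OF a])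
      show "\<rho> \<alpha> (\<Phi> y - x) = 0" using y a Phicar[OF y(1)] x H.f_diff unfolding S_def by simp
    qed
  qed
  then show ?thesis using y YU unfolding \<Phi>_def by auto
qed

end


locale ce2 = ce L A M \<rho> for L :: "('a::ab_group_add) glie" and A :: "'i set"
  and M :: "'i \<Rightarrow> ('b::ab_group_add) glie" and \<rho> :: "'i \<Rightarrow> 'a \<Rightarrow> 'b" +
  assumes H2: "\<forall>p. fin_dim_quot (lsc L) (lgr L p) (lcs_closure L A \<rho> 2 \<inter> lgr L p)"
begin

lemma exF: "\<exists>F. finite F \<and> F \<subseteq> lgr L p \<and> lgr L p \<subseteq> V.span (F \<union> (lcs_closure L A \<rho> 2 \<inter> lgr L p))"
  using H2 unfolding fin_dim_quot_def by blast

definition Ff where "Ff p = (SOME F. finite F \<and> F \<subseteq> lgr L p \<and> lgr L p \<subseteq> V.span (F \<union> (lcs_closure L A \<rho> 2 \<inter> lgr L p)))"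

lemma Ff: "finite (Ff p)" "Ff p \<subseteq> lgr L p" "lgr L p \<subseteq> V.span (Ff p \<union> (lcs_closure L A \<rho> 2 \<inter> lgr L p))"
  using someI_ex[OF exF[of p]] unfolding Ff_def by blast+

definition Jp where "Jp p = Sigma {..p} Ff"

lemma Jp_fin: "finite (Jp p)" unfolding Jp_def using Ff(1) by auto

lemma Jp_mem: "i \<in> Jp p \<Longrightarrow> fst i \<le> p \<and> snd i \<in> lgr L (fst i)"
  unfolding Jp_def using Ff(2) by (auto simp: subset_iff)

lemma closure_sub_car: "lcs_closure L A \<rho> k \<subseteq> car L" unfolding lcs_closure_def by blast

lemma genM:
  assumes a: "\<alpha> \<in> A"
  shows "lgr (M \<alpha>) q \<subseteq> module.span (lsc (M \<alpha>)) (\<rho> \<alpha> ` Ff q \<union> (lcs (M \<alpha>) 2 \<inter> lgr (M \<alpha>) q))"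
proof
  interpret H: ghom L "M \<alpha>" "\<rho> \<alpha>" by (rule Mhom[OF a])
  fix y assume y: "y \<in> lgr (M \<alpha>) q"
  then obtain x where x: "x \<in> lgr L q" "y = \<rho> \<alpha> x" using H.f_gr_surj by blast
  have sub: "Ff q \<union> (lcs_closure L A \<rho> 2 \<inter> lgr L q) \<subseteq> car L"
    using Ff(2) gr_car closure_sub_car by blast
  have "y \<in> \<rho> \<alpha> ` V.span (Ff q \<union> (lcs_closure L A \<rho> 2 \<inter> lgr L q))" using x Ff(3) by blast
  then have "y \<in> H.M.V.span (\<rho> \<alpha> ` (Ff q \<union> (lcs_closure L A \<rho> 2 \<inter> lgr L q)))"
    using H.f_span[OF sub] by simp
  moreover have "\<rho> \<alpha> ` (Ff q \<union> (lcs_closure L A \<rho> 2 \<inter> lgr L q)) \<subseteq> \<rho> \<alpha> ` Ff q \<union> (lcs (M \<alpha>) 2 \<inter> lgr (M \<alpha>) q)"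
    using closure_iff a H.f_gr by blast
  ultimately show "y \<in> H.M.V.span (\<rho> \<alpha> ` Ff q \<union> (lcs (M \<alpha>) 2 \<inter> lgr (M \<alpha>) q))"
    using H.M.V.span_mono by blast
qed

lemma KLa:
  assumes a: "\<alpha> \<in> A"
  shows "lcs (M \<alpha>) (Suc (Suc k)) \<inter> lgr (M \<alpha>) p \<subseteq>
     module.span (lsc (M \<alpha>)) {lbr (M \<alpha>) (\<rho> \<alpha> (snd i)) m | i m. i \<in> Jp p \<and> m \<in> lcs (M \<alpha>) (Suc k) \<inter> lgr (M \<alpha>) (p - fst i)}"
proof -
  interpret H: ghom L "M \<alpha>" "\<rho> \<alpha>" by (rule Mhom[OF a])
  obtain N where N: "lcs (M \<alpha>) N = {0}" using Mnil[OF a] by blast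
  show ?thesis
  proof (rule H.M.KL[OF N])
    show "\<forall>i\<in>Jp p. \<rho> \<alpha> (snd i) \<in> lgr (M \<alpha>) (fst i)" using Jp_mem H.f_gr by blast
    show "\<forall>q\<le>p. lgr (M \<alpha>) q \<subseteq> H.M.V.span ((\<lambda>i. \<rho> \<alpha> (snd i)) ` {i \<in> Jp p. fst i = q} \<union> (lcs (M \<alpha>) 2 \<inter> lgr (M \<alpha>) q))"
    proof (intro allI impI)
      fix q assume q: "q \<le> p"
      have "(\<lambda>i. \<rho> \<alpha> (snd i)) ` {i \<in> Jp p. fst i = q} = \<rho> \<alpha> ` Ff q"
        using q unfolding Jp_def by force
      then show "lgr (M \<alpha>) q \<subseteq> H.M.V.span ((\<lambda>i. \<rho> \<alpha> (snd i)) ` {i \<in> Jp p. fst i = q} \<union> (lcs (M \<alpha>) 2 \<inter> lgr (M \<alpha>) q))"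
        using genM[OF a] by simp
    qed
  qed
qed

lemma closure_step:
  assumes IH: "lcs_closure L A \<rho> (Suc k) \<subseteq> lcs L (Suc k)"
  shows "lcs_closure L A \<rho> (Suc (Suc k)) \<inter> lgr L p \<subseteq> lcs L (Suc (Suc k))"
proof
  fix x assume x: "x \<in> lcs_closure L A \<rho> (Suc (Suc k)) \<inter> lgr L p"
  have xc: "x \<in> car L" using x closure_sub_car by blast
  define U where "U i = lcs L (Suc k) \<inter> lgr L (p - fst i)" for i :: "nat \<times> 'a"
  have "\<exists>y. (\<forall>j\<in>Jp p. y j \<in> U j) \<and> (\<Sum>j\<in>Jp p. lbr L (snd j) (y j)) = x"
  proof (rule lift_solve[where d="\<lambda>i. p - fst i"])
    show "finite (Jp p)" by (rule Jp_fin)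
    show "\<forall>j\<in>Jp p. snd j \<in> car L" using Jp_mem gr_car by blast
    show "\<forall>j\<in>Jp p. V.subspace (U j) \<and> U j \<subseteq> lgr L (p - fst j)"
      unfolding U_def using V.subspace_inter[OF lcs_sub sub_gr] by blast
    show "\<forall>j\<in>Jp p. \<forall>z\<in>lgr L (p - fst j). (\<forall>\<beta>\<in>A. \<rho> \<beta> z \<in> \<rho> \<beta> ` U j) \<longrightarrow> z \<in> U j"
    proof (intro ballI impI)
      fix j z assume z: "z \<in> lgr L (p - fst j)" "\<forall>\<beta>\<in>A. \<rho> \<beta> z \<in> \<rho> \<beta> ` U j"
      have "z \<in> lcs_closure L A \<rho> (Suc k)"
        unfolding lcs_closure_def using z gr_car unfolding U_def by blast
      then show "z \<in> U j" using IH z unfolding U_def by blast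
    qed
    show "x \<in> car L" by (rule xc)
    show "\<forall>\<alpha>\<in>A. \<exists>y. (\<forall>j\<in>Jp p. y j \<in> U j) \<and> \<rho> \<alpha> (\<Sum>j\<in>Jp p. lbr L (snd j) (y j)) = \<rho> \<alpha> x"
    proof
      fix \<alpha> assume a: "\<alpha> \<in> A"
      interpret H: ghom L "M \<alpha>" "\<rho> \<alpha>" by (rule Mhom[OF a])
      have "\<rho> \<alpha> x \<in> lcs (M \<alpha>) (Suc (Suc k)) \<inter> lgr (M \<alpha>) p"
        using x a closure_iff H.f_gr by blast
      then have "\<rho> \<alpha> x \<in> H.M.V.span {lbr (M \<alpha>) (\<rho> \<alpha> (snd i)) m | i m. i \<in> Jp p \<and> m \<in> lcs (M \<alpha>) (Suc k) \<inter> lgr (M \<alpha>) (p - fst i)}"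
        using KLa[OF a] by blast
      also have "\<dots> \<subseteq> {\<Sum>i\<in>Jp p. lbr (M \<alpha>) (\<rho> \<alpha> (snd i)) (m i) | m. \<forall>i\<in>Jp p. m i \<in> lcs (M \<alpha>) (Suc k) \<inter> lgr (M \<alpha>) (p - fst i)}"
      proof (rule H.M.sum_form[OF Jp_fin])
        show "\<forall>i\<in>Jp p. \<rho> \<alpha> (snd i) \<in> car (M \<alpha>)" using Jp_mem H.f_gr H.M.gr_car by blast
        show "\<forall>i\<in>Jp p. H.M.V.subspace (lcs (M \<alpha>) (Suc k) \<inter> lgr (M \<alpha>) (p - fst i)) \<and> lcs (M \<alpha>) (Suc k) \<inter> lgr (M \<alpha>) (p - fst i) \<subseteq> car (M \<alpha>)"
          using H.M.V.subspace_inter[OF H.M.lcs_sub H.M.sub_gr] H.M.lcs_car by blast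
      qed
      finally obtain m where m: "\<rho> \<alpha> x = (\<Sum>i\<in>Jp p. lbr (M \<alpha>) (\<rho> \<alpha> (snd i)) (m i))"
        "\<forall>i\<in>Jp p. m i \<in> lcs (M \<alpha>) (Suc k) \<inter> lgr (M \<alpha>) (p - fst i)" by blast
      have "\<forall>i\<in>Jp p. \<exists>yi. yi \<in> U i \<and> \<rho> \<alpha> yi = m i"
        using m(2) H.f_lcs_gr unfolding U_def by (metis (no_types, lifting) imageE)
      then obtain y where y: "\<forall>i\<in>Jp p. y i \<in> U i \<and> \<rho> \<alpha> (y i) = m i" by metis
      have yc: "\<forall>i\<in>Jp p. y i \<in> car L" using y lcs_car unfolding U_def by blast
      have "\<rho> \<alpha> (\<Sum>j\<in>Jp p. lbr L (snd j) (y j)) = (\<Sum>j\<in>Jp p. \<rho> \<alpha> (lbr L (snd j) (y j)))"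
        using yc Jp_mem gr_car by (intro H.f_sum[OF Jp_fin]) (blast intro: br_car)
      also have "\<dots> = (\<Sum>j\<in>Jp p. lbr (M \<alpha>) (\<rho> \<alpha> (snd j)) (m j))"
      proof (rule sum.cong)
        fix j assume j: "j \<in> Jp p"
        have "snd j \<in> car L" using Jp_mem[OF j] gr_car by blast
        then show "\<rho> \<alpha> (lbr L (snd j) (y j)) = lbr (M \<alpha>) (\<rho> \<alpha> (snd j)) (m j)"
          using H.f_br yc y j by simp
      qed simp
      finally show "\<exists>y. (\<forall>j\<in>Jp p. y j \<in> U j) \<and> \<rho> \<alpha> (\<Sum>j\<in>Jp p. lbr L (snd j) (y j)) = \<rho> \<alpha> x"
        using y m(1) by auto
    qed
  qed
  then obtain y where y: "\<forall>j\<in>Jp p. y j \<in> U j" "(\<Sum>j\<in>Jp p. lbr L (snd j) (y j)) = x" by blast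
  have "(\<Sum>j\<in>Jp p. lbr L (snd j) (y j)) \<in> lcs L (Suc (Suc k))"
  proof (rule V.subspace_sum[OF lcs_sub])
    fix j assume j: "j \<in> Jp p"
    show "lbr L (snd j) (y j) \<in> lcs L (Suc (Suc k))"
      using br_lcs Jp_mem[OF j] gr_car y(1) j unfolding U_def by blast
  qed
  then show "x \<in> lcs L (Suc (Suc k))" using y(2) by simp
qed

lemma closure_graded:
  assumes deg: "\<forall>p. lcs_closure L A \<rho> k \<inter> lgr L p \<subseteq> lcs L k"
  shows "lcs_closure L A \<rho> k \<subseteq> lcs L k"
proof
  fix x assume x: "x \<in> lcs_closure L A \<rho> k"
  have xc: "x \<in> car L" using x closure_sub_car by blast
  then have "x \<in> V.span hom" using car_span_hom by simp
  then obtain n xs where d: "\<forall>q. xs q \<in> V.span (hom \<inter> lgr L q)" "\<forall>q\<ge>n. xs q = 0" "x = (\<Sum>q<n. xs q)"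
    using decomp[OF subset_refl] by blast
  have sg: "xs q \<in> lgr L q" for q
  proof -
    have "V.span (hom \<inter> lgr L q) \<subseteq> lgr L q" by (rule V.span_minimal[OF _ sub_gr]) auto
    then show ?thesis using d(1) by blast
  qed
  have xcl: "xs q \<in> lcs_closure L A \<rho> k" for q
  proof -
    have "\<rho> \<alpha> (xs q) \<in> lcs (M \<alpha>) k" if a: "\<alpha> \<in> A" for \<alpha>
    proof -
      interpret H: ghom L "M \<alpha>" "\<rho> \<alpha>" by (rule Mhom[OF a])
      have rx: "\<rho> \<alpha> x \<in> lcs (M \<alpha>) k" using x a closure_iff by blast
      then have "\<rho> \<alpha> x \<in> H.M.V.span (lcs (M \<alpha>) k \<inter> H.M.hom)" using H.M.lcs_homog by blast
      then obtain n' ws where w: "\<forall>q. ws q \<in> H.M.V.span ((lcs (M \<alpha>) k \<inter> H.M.hom) \<inter> lgr (M \<alpha>) q)"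
        "\<forall>q\<ge>n'. ws q = 0" "\<rho> \<alpha> x = (\<Sum>q<n'. ws q)"
        using H.M.decomp[of "lcs (M \<alpha>) k \<inter> H.M.hom"] by blast
      have wsg: "ws q \<in> lcs (M \<alpha>) k \<inter> lgr (M \<alpha>) q" for q
      proof -
        have "H.M.V.span ((lcs (M \<alpha>) k \<inter> H.M.hom) \<inter> lgr (M \<alpha>) q) \<subseteq> lcs (M \<alpha>) k \<inter> lgr (M \<alpha>) q"
          by (rule H.M.V.span_minimal[OF _ H.M.V.subspace_inter[OF H.M.lcs_sub H.M.sub_gr]]) auto
        then show ?thesis using w(1) by blast
      qed
      define N where "N = Suc (max q (max n n'))"
      have s1: "(\<Sum>q<N. ws q) = \<rho> \<alpha> x" using w by (subst sum_ext_zero[of n']) (auto simp: N_def)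
      have "\<rho> \<alpha> x = (\<Sum>q<n. \<rho> \<alpha> (xs q))" unfolding d(3) by (rule H.f_sum) (use sg gr_car in auto)
      also have "\<dots> = (\<Sum>q<N. \<rho> \<alpha> (xs q))" using d(2) by (intro sum_ext_zero[symmetric]) (auto simp: N_def)
      finally have s2: "(\<Sum>q<N. \<rho> \<alpha> (xs q)) = \<rho> \<alpha> x" by simp
      have "(\<lambda>q. \<rho> \<alpha> (xs q)) q = ws q"
      proof (rule H.M.unique[where n=N and a="\<lambda>q. \<rho> \<alpha> (xs q)" and b=ws and q=q])
        show "\<forall>q<N. \<rho> \<alpha> (xs q) \<in> lgr (M \<alpha>) q" using sg H.f_gr by blast
        show "\<forall>q<N. ws q \<in> lgr (M \<alpha>) q" using wsg by blast
        show "(\<Sum>q<N. \<rho> \<alpha> (xs q)) = (\<Sum>q<N. ws q)" using s1 s2 by simp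
      qed (simp add: N_def)
      then show ?thesis using wsg by simp
    qed
    then show ?thesis using closure_iff sg gr_car by blast
  qed
  have "(\<Sum>q<n. xs q) \<in> lcs L k"
    by (rule V.subspace_sum[OF lcs_sub]) (use deg xcl sg in blast)
  then show "x \<in> lcs L k" using d(3) by simp
qed

lemma thm_ii: "\<forall>k\<ge>1. lcs L k = lcs_closure L A \<rho> k"
proof -
  have sub: "lcs L k \<subseteq> lcs_closure L A \<rho> k" for k
    unfolding lcs_closure_def using lcs_car by blast
  have "lcs_closure L A \<rho> (Suc k) \<subseteq> lcs L (Suc k)" for k
  proof (induction k)
    case 0 then show ?case using closure_sub_car lcs_1 by simp
  next
    case (Suc k)
    show ?case by (rule closure_graded) (use closure_step[OF Suc] in blast)
  qed
  then have "lcs L (Suc k) = lcs_closure L A \<rho> (Suc k)" for k using sub by blast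
  then show ?thesis by (metis Suc_pred' less_eq_Suc_le One_nat_def)
qed

end


context ce2 begin

lemma finG_SS: "\<exists>G. finite G \<and> G \<subseteq> lgr L p \<and> (\<forall>\<alpha>\<in>A. lgr (M \<alpha>) p \<subseteq>
          module.span (lsc (M \<alpha>)) (\<rho> \<alpha> ` G \<union> (lcs (M \<alpha>) (Suc (Suc k)) \<inter> lgr (M \<alpha>) p)))"
proof (induction k arbitrary: p)
  case 0
  have "lcs (M \<alpha>) (Suc (Suc 0)) = lcs (M \<alpha>) 2" for \<alpha> by (simp add: numeral_2_eq_2)
  then show ?case using genM Ff(1,2) by metis
next
  case (Suc k)
  from Suc.IH obtain Gf where Gf: "\<And>q. finite (Gf q) \<and> Gf q \<subseteq> lgr L q \<and> (\<forall>\<alpha>\<in>A. lgr (M \<alpha>) q \<subseteq>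
          module.span (lsc (M \<alpha>)) (\<rho> \<alpha> ` Gf q \<union> (lcs (M \<alpha>) (Suc (Suc k)) \<inter> lgr (M \<alpha>) q)))"
    by metis
  define G' where "G' = Gf p \<union> (\<Union>i\<in>Jp p. (\<lambda>g. lbr L (snd i) g) ` Gf (p - fst i))"
  have fG': "finite G'" unfolding G'_def using Gf Jp_fin by auto
  have G'p: "G' \<subseteq> lgr L p"
  proof -
    have "lbr L (snd i) g \<in> lgr L p" if i: "i \<in> Jp p" and g: "g \<in> Gf (p - fst i)" for i g
    proof -
      have "lbr L (snd i) g \<in> lgr L (fst i + (p - fst i))"
        using br_grade Jp_mem[OF i] Gf g by blast
      then show ?thesis using Jp_mem[OF i] by simp
    qed
    then show ?thesis unfolding G'_def using Gf by blast
  qed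
  have "lgr (M \<alpha>) p \<subseteq> module.span (lsc (M \<alpha>)) (\<rho> \<alpha> ` G' \<union> (lcs (M \<alpha>) (Suc (Suc (Suc k))) \<inter> lgr (M \<alpha>) p))"
    if a: "\<alpha> \<in> A" for \<alpha>
  proof -
    interpret H: ghom L "M \<alpha>" "\<rho> \<alpha>" by (rule Mhom[OF a])
    define T where "T = H.M.V.span (\<rho> \<alpha> ` G' \<union> (lcs (M \<alpha>) (Suc (Suc (Suc k))) \<inter> lgr (M \<alpha>) p))"
    have Tsub: "H.M.V.subspace T" unfolding T_def by simp
    have G'T: "\<rho> \<alpha> ` G' \<subseteq> T" unfolding T_def by (rule order_trans[OF Un_upper1 H.M.V.span_superset])
    have X'T: "lcs (M \<alpha>) (Suc (Suc (Suc k))) \<inter> lgr (M \<alpha>) p \<subseteq> T" unfolding T_def by (rule order_trans[OF Un_upper2 H.M.V.span_superset])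
    have genT: "lbr (M \<alpha>) (\<rho> \<alpha> (snd i)) m \<in> T"
      if i: "i \<in> Jp p" and m: "m \<in> lcs (M \<alpha>) (Suc k) \<inter> lgr (M \<alpha>) (p - fst i)" for i m
    proof -
      define r where "r = p - fst i"
      have si: "snd i \<in> lgr L (fst i)" "fst i \<le> p" using Jp_mem[OF i] by auto
      have sic: "\<rho> \<alpha> (snd i) \<in> car (M \<alpha>)" using si H.f_gr H.M.gr_car by blast
      have mr: "m \<in> lgr (M \<alpha>) r" using m unfolding r_def by blast
      then have "m \<in> H.M.V.span (\<rho> \<alpha> ` Gf r \<union> (lcs (M \<alpha>) (Suc (Suc k)) \<inter> lgr (M \<alpha>) r))" using Gf a by blast
      moreover have sub: "\<rho> \<alpha> ` Gf r \<union> (lcs (M \<alpha>) (Suc (Suc k)) \<inter> lgr (M \<alpha>) r) \<subseteq> car (M \<alpha>)"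
        using Gf H.f_gr H.M.gr_car H.M.lcs_car by blast
      ultimately have "lbr (M \<alpha>) (\<rho> \<alpha> (snd i)) m \<in>
          H.M.V.span {lbr (M \<alpha>) (\<rho> \<alpha> (snd i)) u | u. u \<in> \<rho> \<alpha> ` Gf r \<union> (lcs (M \<alpha>) (Suc (Suc k)) \<inter> lgr (M \<alpha>) r)}"
        using H.M.br_span_right[OF sub sic] by blast
      moreover have "{lbr (M \<alpha>) (\<rho> \<alpha> (snd i)) u | u. u \<in> \<rho> \<alpha> ` Gf r \<union> (lcs (M \<alpha>) (Suc (Suc k)) \<inter> lgr (M \<alpha>) r)} \<subseteq> T"
      proof
        fix z assume "z \<in> {lbr (M \<alpha>) (\<rho> \<alpha> (snd i)) u | u. u \<in> \<rho> \<alpha> ` Gf r \<union> (lcs (M \<alpha>) (Suc (Suc k)) \<inter> lgr (M \<alpha>) r)}"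
        then obtain u where u: "z = lbr (M \<alpha>) (\<rho> \<alpha> (snd i)) u" "u \<in> \<rho> \<alpha> ` Gf r \<union> (lcs (M \<alpha>) (Suc (Suc k)) \<inter> lgr (M \<alpha>) r)"
          by blast
        show "z \<in> T"
        proof (cases "u \<in> \<rho> \<alpha> ` Gf r")
          case True
          then obtain g where g: "g \<in> Gf r" "u = \<rho> \<alpha> g" by blast
          have "g \<in> car L" "snd i \<in> car L" using g Gf si gr_car by blast+
          then have "z = \<rho> \<alpha> (lbr L (snd i) g)" using u g H.f_br by simp
          moreover have "lbr L (snd i) g \<in> G'" unfolding G'_def using i g unfolding r_def by blast
          ultimately show ?thesis using G'T by blast
        next
          case False
          then have uu: "u \<in> lcs (M \<alpha>) (Suc (Suc k))" "u \<in> lgr (M \<alpha>) r" using u by auto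
          have "z \<in> lcs (M \<alpha>) (Suc (Suc (Suc k)))" using H.M.br_lcs[OF sic uu(1)] u by simp
          moreover have "z \<in> lgr (M \<alpha>) (fst i + r)" using H.M.br_grade[OF H.f_gr[OF si(1)] uu(2)] u by simp
          moreover have "fst i + r = p" using si unfolding r_def by simp
          ultimately show ?thesis using X'T by auto
        qed
      qed
      ultimately show ?thesis using H.M.V.span_minimal[OF _ Tsub] by blast
    qed
    have XT: "lcs (M \<alpha>) (Suc (Suc k)) \<inter> lgr (M \<alpha>) p \<subseteq> T"
    proof -
      have "{lbr (M \<alpha>) (\<rho> \<alpha> (snd i)) m | i m. i \<in> Jp p \<and> m \<in> lcs (M \<alpha>) (Suc k) \<inter> lgr (M \<alpha>) (p - fst i)} \<subseteq> T"
        using genT by blast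
      then show ?thesis using KLa[OF a, of k p] H.M.V.span_minimal[OF _ Tsub] by blast
    qed
    have "\<rho> \<alpha> ` Gf p \<subseteq> \<rho> \<alpha> ` G'" unfolding G'_def by blast
    then have "\<rho> \<alpha> ` Gf p \<union> (lcs (M \<alpha>) (Suc (Suc k)) \<inter> lgr (M \<alpha>) p) \<subseteq> T" using G'T XT by blast
    then have "H.M.V.span (\<rho> \<alpha> ` Gf p \<union> (lcs (M \<alpha>) (Suc (Suc k)) \<inter> lgr (M \<alpha>) p)) \<subseteq> T"
      using H.M.V.span_minimal[OF _ Tsub] by blast
    then show ?thesis using Gf a unfolding T_def by blast
  qed
  then show ?case using fG' G'p by blast
qed

lemma finG: "\<exists>G. finite G \<and> G \<subseteq> lgr L p \<and> (\<forall>\<alpha>\<in>A. lgr (M \<alpha>) p \<subseteq>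
          module.span (lsc (M \<alpha>)) (\<rho> \<alpha> ` G \<union> (lcs (M \<alpha>) k \<inter> lgr (M \<alpha>) p)))"
proof (cases "k \<le> 1")
  case True
  have "lgr (M \<alpha>) p \<subseteq> module.span (lsc (M \<alpha>)) (\<rho> \<alpha> ` {} \<union> (lcs (M \<alpha>) k \<inter> lgr (M \<alpha>) p))"
    if a: "\<alpha> \<in> A" for \<alpha>
  proof -
    interpret MA: gl "M \<alpha>" by (rule Mgl[OF a])
    have "lcs (M \<alpha>) k = car (M \<alpha>)" using True MA.lcs_0 MA.lcs_1 by (cases k) auto
    then show ?thesis using MA.gr_car MA.V.span_superset by blast
  qed
  then show ?thesis by (intro exI[of _ "{}"]) auto
next
  case False
  then have "k = Suc (Suc (k - 2))" by simp
  then show ?thesis using finG_SS[of p "k - 2"] by simp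
qed

end


context ce2 begin

lemma thm_i: "\<exists>\<alpha>\<in>A. \<exists>f.
            bij_betw f (quot (lgr L p) (lcs_closure L A \<rho> k \<inter> lgr L p))
                       (quot (lgr (M \<alpha>) p) (lcs (M \<alpha>) k \<inter> lgr (M \<alpha>) p)) \<and>
            (\<forall>x\<in>lgr L p. f (coset x (lcs_closure L A \<rho> k \<inter> lgr L p))
                          = coset (\<rho> \<alpha> x) (lcs (M \<alpha>) k \<inter> lgr (M \<alpha>) p))"
proof -
  obtain G where G: "finite G" "G \<subseteq> lgr L p"
    "\<forall>\<alpha>\<in>A. lgr (M \<alpha>) p \<subseteq> module.span (lsc (M \<alpha>)) (\<rho> \<alpha> ` G \<union> (lcs (M \<alpha>) k \<inter> lgr (M \<alpha>) p))"
    using finG[of p k] by blast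
  define N where "N \<alpha> = {x \<in> lgr L p. \<rho> \<alpha> x \<in> lcs (M \<alpha>) k}" for \<alpha>
  define Z where "Z \<alpha> = N \<alpha> \<inter> V.span G" for \<alpha>
  have spG: "V.span G \<subseteq> lgr L p" using V.span_minimal[OF G(2) sub_gr] .
  have Nsub: "V.subspace (N \<alpha>)" if a: "\<alpha> \<in> A" for \<alpha>
  proof -
    interpret H: ghom L "M \<alpha>" "\<rho> \<alpha>" by (rule Mhom[OF a])
    show ?thesis
    proof (rule V.subspaceI)
      show "0 \<in> N \<alpha>" unfolding N_def using H.M.V.subspace_0[OF H.M.lcs_sub] by simp
    next
      fix x y assume xy: "x \<in> N \<alpha>" "y \<in> N \<alpha>"
      then have c: "x \<in> car L" "y \<in> car L" unfolding N_def using gr_car by auto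
      show "x + y \<in> N \<alpha>" using xy H.f_add[OF c] V.subspace_add[OF sub_gr] H.M.V.subspace_add[OF H.M.lcs_sub]
        unfolding N_def by auto
    next
      fix c x assume x: "x \<in> N \<alpha>"
      then have xc: "x \<in> car L" unfolding N_def using gr_car by auto
      show "lsc L c x \<in> N \<alpha>" using x H.f_scale[OF xc] V.subspace_scale[OF sub_gr] H.M.V.subspace_scale[OF H.M.lcs_sub]
        unfolding N_def by auto
    qed
  qed
  have Zsub: "V.subspace (Z \<alpha>)" if "\<alpha> \<in> A" for \<alpha>
    unfolding Z_def using V.subspace_inter[OF Nsub[OF that] V.subspace_span] .
  have Nmono: "N \<gamma> \<subseteq> N \<alpha>" if a: "\<alpha> \<in> A" and g: "\<gamma> \<in> A" and K: "hom_ker L (\<rho> \<gamma>) \<subseteq> hom_ker L (\<rho> \<alpha>)" for \<alpha> \<gamma>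
  proof
    interpret Ha: ghom L "M \<alpha>" "\<rho> \<alpha>" by (rule Mhom[OF a])
    interpret Hg: ghom L "M \<gamma>" "\<rho> \<gamma>" by (rule Mhom[OF g])
    fix x assume x: "x \<in> N \<gamma>"
    then obtain w where w: "w \<in> lcs L k" "\<rho> \<gamma> x = \<rho> \<gamma> w" unfolding N_def using Hg.f_lcs by force
    have "\<rho> \<alpha> x = \<rho> \<alpha> w" using Ktrans[OF a g K _ _ w(2)] x w(1) lcs_car gr_car unfolding N_def by blast
    then show "x \<in> N \<alpha>" using x w(1) Ha.f_lcs unfolding N_def by blast
  qed
  obtain \<alpha>0 where a0: "\<alpha>0 \<in> A" "\<forall>\<alpha>. \<alpha> \<in> A \<longrightarrow> V.dim (Z \<alpha>0) \<le> V.dim (Z \<alpha>)"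
    using ex_has_least_nat[of "\<lambda>\<alpha>. \<alpha> \<in> A" _ "\<lambda>\<alpha>. V.dim (Z \<alpha>)"] Ane by blast
  interpret H0: ghom L "M \<alpha>0" "\<rho> \<alpha>0" by (rule Mhom[OF a0(1)])
  have W: "lcs_closure L A \<rho> k \<inter> lgr L p = N \<alpha>0"
  proof
    show "lcs_closure L A \<rho> k \<inter> lgr L p \<subseteq> N \<alpha>0" unfolding N_def using closure_iff a0(1) by blast
    show "N \<alpha>0 \<subseteq> lcs_closure L A \<rho> k \<inter> lgr L p"
    proof
      fix x assume x: "x \<in> N \<alpha>0"
      have xp: "x \<in> lgr L p" using x unfolding N_def by blast
      have "\<rho> \<beta> x \<in> lcs (M \<beta>) k" if b: "\<beta> \<in> A" for \<beta>
      proof -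
        obtain \<gamma> where g: "\<gamma> \<in> A" "hom_ker L (\<rho> \<gamma>) \<subseteq> hom_ker L (\<rho> \<alpha>0) \<inter> hom_ker L (\<rho> \<beta>)"
          using Kdir[OF a0(1) b] by blast
        interpret Hg: ghom L "M \<gamma>" "\<rho> \<gamma>" by (rule Mhom[OF g(1)])
        have NgN0: "N \<gamma> \<subseteq> N \<alpha>0" using Nmono[OF a0(1) g(1)] g(2) by blast
        have NgNb: "N \<gamma> \<subseteq> N \<beta>" using Nmono[OF b g(1)] g(2) by blast
        have ZgZ0: "Z \<gamma> \<subseteq> Z \<alpha>0" using NgN0 unfolding Z_def by blast
        have Z0Zg: "Z \<alpha>0 \<subseteq> Z \<gamma>"
        proof (rule V.sub_dim_eq[OF Zsub[OF g(1)] ZgZ0 _ G(1)])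
          show "Z \<alpha>0 \<subseteq> V.span G" unfolding Z_def by blast
          show "V.dim (Z \<alpha>0) \<le> V.dim (Z \<gamma>)" using a0(2) g(1) by blast
        qed
        have "\<rho> \<gamma> x \<in> lgr (M \<gamma>) p" using xp Hg.f_gr by blast
        then have "\<rho> \<gamma> x \<in> Hg.M.V.span (\<rho> \<gamma> ` G \<union> (lcs (M \<gamma>) k \<inter> lgr (M \<gamma>) p))" using G(3) g(1) by blast
        then obtain u m where um: "\<rho> \<gamma> x = u + m" "u \<in> Hg.M.V.span (\<rho> \<gamma> ` G)"
          "m \<in> Hg.M.V.span (lcs (M \<gamma>) k \<inter> lgr (M \<gamma>) p)"
          unfolding Hg.M.V.span_Un by blast
        have "m \<in> lcs (M \<gamma>) k \<inter> lgr (M \<gamma>) p"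
          using um(3) Hg.M.V.span_eq_iff[THEN iffD2, OF Hg.M.V.subspace_inter[OF Hg.M.lcs_sub Hg.M.sub_gr]] by simp
        then have m: "m \<in> lcs (M \<gamma>) k" by blast
        have Gc: "G \<subseteq> car L" using G(2) gr_car by blast
        obtain g0 where g0: "g0 \<in> V.span G" "u = \<rho> \<gamma> g0" using um(2) Hg.f_span[OF Gc] by blast
        have g0p: "g0 \<in> lgr L p" using g0 spG by blast
        have xc: "x \<in> car L" "g0 \<in> car L" using xp g0p gr_car by auto
        have "\<rho> \<gamma> (x - g0) = m" using um(1) g0(2) Hg.f_diff[OF xc] by simp
        then have xg: "x - g0 \<in> N \<gamma>" unfolding N_def using m V.subspace_diff[OF sub_gr xp g0p] by simp
        then have "x - g0 \<in> N \<alpha>0" using NgN0 by blast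
        then have "x - (x - g0) \<in> N \<alpha>0" using V.subspace_diff[OF Nsub[OF a0(1)] x] by blast
        then have "g0 \<in> Z \<alpha>0" unfolding Z_def using g0 by simp
        then have "g0 \<in> N \<gamma>" using Z0Zg unfolding Z_def by blast
        then have "(x - g0) + g0 \<in> N \<gamma>" using V.subspace_add[OF Nsub[OF g(1)] xg] by blast
        then have "x \<in> N \<gamma>" by simp
        then have "x \<in> N \<beta>" using NgNb by blast
        then show ?thesis unfolding N_def by blast
      qed
      then show "x \<in> lcs_closure L A \<rho> k \<inter> lgr L p" using closure_iff xp gr_car by blast
    qed
  qed
  define W where "W = lcs_closure L A \<rho> k \<inter> lgr L p"
  define W' where "W' = lcs (M \<alpha>0) k \<inter> lgr (M \<alpha>0) p"
  have W'sub: "H0.M.V.subspace W'" unfolding W'_def by (rule H0.M.V.subspace_inter[OF H0.M.lcs_sub H0.M.sub_gr])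
  have cW: "coset a W = coset b W \<longleftrightarrow> a - b \<in> W" for a b
  proof (rule coset_eq)
    show "0 \<in> W" unfolding W_def W using V.subspace_0[OF Nsub[OF a0(1)]] .
    show "u - v \<in> W" if "u \<in> W" "v \<in> W" for u v
      using that unfolding W_def W using V.subspace_diff[OF Nsub[OF a0(1)]] by blast
  qed
  have cW': "coset a W' = coset b W' \<longleftrightarrow> a - b \<in> W'" for a b
  proof (rule coset_eq)
    show "0 \<in> W'" using H0.M.V.subspace_0[OF W'sub] .
    show "u - v \<in> W'" if "u \<in> W'" "v \<in> W'" for u v using H0.M.V.subspace_diff[OF W'sub that] .
  qed
  have key: "x - y \<in> W \<longleftrightarrow> \<rho> \<alpha>0 x - \<rho> \<alpha>0 y \<in> W'" if "x \<in> lgr L p" "y \<in> lgr L p" for x y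
  proof -
    have c: "x \<in> car L" "y \<in> car L" using that gr_car by auto
    have "x - y \<in> lgr L p" using V.subspace_diff[OF sub_gr that] .
    moreover have "\<rho> \<alpha>0 x - \<rho> \<alpha>0 y \<in> lgr (M \<alpha>0) p"
      using H0.M.V.subspace_diff[OF H0.M.sub_gr H0.f_gr[OF that(1)] H0.f_gr[OF that(2)]] .
    ultimately show ?thesis unfolding W_def W W'_def N_def using H0.f_diff[OF c] by simp
  qed
  define f where "f C = coset (\<rho> \<alpha>0 (SOME x. x \<in> lgr L p \<and> C = coset x W)) W'" for C
  have feq: "f (coset x W) = coset (\<rho> \<alpha>0 x) W'" if x: "x \<in> lgr L p" for x
  proof -
    define x' where "x' = (SOME x'. x' \<in> lgr L p \<and> coset x W = coset x' W)"
    have x': "x' \<in> lgr L p \<and> coset x W = coset x' W"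
      unfolding x'_def by (rule someI[of _ x]) (use x in simp)
    then have "x - x' \<in> W" using cW by simp
    then have "\<rho> \<alpha>0 x - \<rho> \<alpha>0 x' \<in> W'" using key x x' by blast
    then have "coset (\<rho> \<alpha>0 x) W' = coset (\<rho> \<alpha>0 x') W'" using cW' by simp
    then show ?thesis unfolding f_def x'_def[symmetric] by simp
  qed
  have "bij_betw f (quot (lgr L p) W) (quot (lgr (M \<alpha>0) p) W')"
    unfolding bij_betw_def
  proof
    show "inj_on f (quot (lgr L p) W)"
    proof (rule inj_onI)
      fix C D assume C: "C \<in> quot (lgr L p) W" and D: "D \<in> quot (lgr L p) W" and e: "f C = f D"
      obtain x where x: "x \<in> lgr L p" "C = coset x W" using C unfolding quot_def by blast
      obtain y where y: "y \<in> lgr L p" "D = coset y W" using D unfolding quot_def by blast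
      have "coset (\<rho> \<alpha>0 x) W' = coset (\<rho> \<alpha>0 y) W'" using e feq x y by simp
      then have "\<rho> \<alpha>0 x - \<rho> \<alpha>0 y \<in> W'" using cW' by simp
      then have "x - y \<in> W" using key x(1) y(1) by blast
      then show "C = D" using cW x y by simp
    qed
    show "f ` quot (lgr L p) W = quot (lgr (M \<alpha>0) p) W'"
    proof
      show "f ` quot (lgr L p) W \<subseteq> quot (lgr (M \<alpha>0) p) W'"
        unfolding quot_def using feq H0.f_gr by auto
      show "quot (lgr (M \<alpha>0) p) W' \<subseteq> f ` quot (lgr L p) W"
      proof
        fix C assume "C \<in> quot (lgr (M \<alpha>0) p) W'"
        then obtain y where y: "y \<in> lgr (M \<alpha>0) p" "C = coset y W'" unfolding quot_def by blast
        then obtain x where x: "x \<in> lgr L p" "y = \<rho> \<alpha>0 x" using H0.f_gr_surj by blast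
        then have "C = f (coset x W)" using feq y by simp
        moreover have "coset x W \<in> quot (lgr L p) W" unfolding quot_def using x by blast
        ultimately show "C \<in> f ` quot (lgr L p) W" by blast
      qed
    qed
  qed
  then show ?thesis using feq a0(1) unfolding W_def W'_def by blast
qed

lemma pronil: "pronilpotent L"
  unfolding pronilpotent_def
proof
  fix p
  define Wn where "Wn n = lcs L n \<inter> lgr L p" for n
  have Wsub: "V.subspace (Wn n)" for n unfolding Wn_def by (rule V.subspace_inter[OF lcs_sub sub_gr])
  have cW: "coset a (Wn n) = coset b (Wn n) \<longleftrightarrow> a - b \<in> Wn n" for a b n
  proof (rule coset_eq)
    show "0 \<in> Wn n" using V.subspace_0[OF Wsub] .
    show "u - v \<in> Wn n" if "u \<in> Wn n" "v \<in> Wn n" for u v using V.subspace_diff[OF Wsub that] .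
  qed
  have Wmono: "Wn (Suc n) \<subseteq> Wn n" for n unfolding Wn_def using lcs_mono_Suc by blast
  have Wcl: "x \<in> Wn n" if x: "x \<in> lgr L p" and r: "\<forall>\<alpha>\<in>A. \<rho> \<alpha> x \<in> lcs (M \<alpha>) n" for x n
  proof (cases "n = 0")
    case True then show ?thesis unfolding Wn_def using x lcs_0 gr_car by auto
  next
    case False
    then have "lcs L n = lcs_closure L A \<rho> n" using thm_ii by simp
    moreover have "x \<in> lcs_closure L A \<rho> n" using closure_iff x r gr_car by blast
    ultimately show ?thesis unfolding Wn_def using x by blast
  qed
  have "\<forall>\<alpha>. \<exists>N. \<alpha> \<in> A \<longrightarrow> lcs (M \<alpha>) N = {0}" using Mnil by blast
  from choice[OF this] obtain Nf where Nf0: "\<forall>\<alpha>. \<alpha> \<in> A \<longrightarrow> lcs (M \<alpha>) (Nf \<alpha>) = {0}" by blast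
  have Nf: "lcs (M \<alpha>) (Nf \<alpha>) = {0}" if "\<alpha> \<in> A" for \<alpha> using Nf0 that by blast
  have Wzero: "\<rho> \<alpha> w = 0" if a: "\<alpha> \<in> A" and w: "w \<in> Wn n" and n: "Nf \<alpha> \<le> n" for \<alpha> w n
  proof -
    interpret H: ghom L "M \<alpha>" "\<rho> \<alpha>" by (rule Mhom[OF a])
    have "\<rho> \<alpha> w \<in> lcs (M \<alpha>) n" using w H.f_lcs unfolding Wn_def by blast
    then have "\<rho> \<alpha> w \<in> lcs (M \<alpha>) (Nf \<alpha>)" using H.M.lcs_antimono[OF n] by blast
    then show ?thesis using Nf[OF a] by blast
  qed
  show "bij_betw (\<lambda>x n. coset x (lcs L n \<inter> lgr L p)) (lgr L p)
          {c. \<forall>n. c n \<in> quot (lgr L p) (lcs L n \<inter> lgr L p) \<and> c (Suc n) \<subseteq> c n}"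
    unfolding Wn_def[symmetric] bij_betw_def
  proof
    show "inj_on (\<lambda>x n. coset x (Wn n)) (lgr L p)"
    proof (rule inj_onI)
      fix x y assume x: "x \<in> lgr L p" and y: "y \<in> lgr L p" and e: "(\<lambda>n. coset x (Wn n)) = (\<lambda>n. coset y (Wn n))"
      have xy: "x - y \<in> Wn n" for n using fun_cong[OF e, of n] cW by simp
      have "x - y = 0"
      proof (rule Ksep)
        show "x - y \<in> car L" using x y gr_car car_diff by blast
        show "\<forall>\<alpha>\<in>A. \<rho> \<alpha> (x - y) = 0" using Wzero xy by blast
      qed
      then show "x = y" by simp
    qed
    show "(\<lambda>x n. coset x (Wn n)) ` lgr L p = {c. \<forall>n. c n \<in> quot (lgr L p) (Wn n) \<and> c (Suc n) \<subseteq> c n}"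
    proof
      show "(\<lambda>x n. coset x (Wn n)) ` lgr L p \<subseteq> {c. \<forall>n. c n \<in> quot (lgr L p) (Wn n) \<and> c (Suc n) \<subseteq> c n}"
        using Wmono unfolding quot_def coset_def by blast
      show "{c. \<forall>n. c n \<in> quot (lgr L p) (Wn n) \<and> c (Suc n) \<subseteq> c n} \<subseteq> (\<lambda>x n. coset x (Wn n)) ` lgr L p"
      proof
        fix c assume "c \<in> {c. \<forall>n. c n \<in> quot (lgr L p) (Wn n) \<and> c (Suc n) \<subseteq> c n}"
        then have c: "\<And>n. c n \<in> quot (lgr L p) (Wn n)" "\<And>n. c (Suc n) \<subseteq> c n" by auto
        have "\<forall>n. \<exists>x. x \<in> lgr L p \<and> c n = coset x (Wn n)" using c(1) unfolding quot_def by blast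
        from choice[OF this] obtain xs where xs0: "\<forall>n. xs n \<in> lgr L p \<and> c n = coset (xs n) (Wn n)" by blast
        have xs: "xs n \<in> lgr L p \<and> c n = coset (xs n) (Wn n)" for n using xs0 by blast
        have cmono: "c m \<subseteq> c n" if "n \<le> m" for m n
          using that
        proof (induction m rule: dec_induct)
          case base then show ?case by simp
        next
          case (step m) then show ?case using c(2)[of m] by blast
        qed
        have xsd: "xs m - xs n \<in> Wn n" if "n \<le> m" for m n
        proof -
          have "xs m + 0 \<in> c m" using xs[of m] V.subspace_0[OF Wsub] unfolding coset_def by blast
          then have "xs m \<in> coset (xs n) (Wn n)" using cmono[OF that] xs[of n] by auto
          then obtain w where "w \<in> Wn n" "xs m = xs n + w" unfolding coset_def by blast
          then show ?thesis by simp
        qed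
        have xsc: "xs n \<in> car L" for n using xs gr_car by blast
        have rxs: "\<rho> \<alpha> (xs m) = \<rho> \<alpha> (xs (Nf \<alpha>))" if a: "\<alpha> \<in> A" and m: "Nf \<alpha> \<le> m" for \<alpha> m
        proof -
          interpret H: ghom L "M \<alpha>" "\<rho> \<alpha>" by (rule Mhom[OF a])
          have "\<rho> \<alpha> (xs m - xs (Nf \<alpha>)) = 0" using Wzero[OF a xsd[OF m] order_refl] .
          then show ?thesis using H.f_diff[OF xsc xsc] by simp
        qed
        define z where "z \<alpha> = \<rho> \<alpha> (xs (Nf \<alpha>))" for \<alpha>
        have "restrict z A \<in> compat_families L A M \<rho> p"
          unfolding compat_families_def
        proof (intro CollectI conjI ballI impI)
          show "restrict z A \<in> extensional A" by simp
        next
          fix \<alpha> assume a: "\<alpha> \<in> A"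
          interpret H: ghom L "M \<alpha>" "\<rho> \<alpha>" by (rule Mhom[OF a])
          show "restrict z A \<alpha> \<in> lgr (M \<alpha>) p" using a H.f_gr xs unfolding z_def by simp
        next
          fix \<alpha> \<beta> x' assume a: "\<alpha> \<in> A" and b: "\<beta> \<in> A"
            and K: "hom_ker L (\<rho> \<beta>) \<subseteq> hom_ker L (\<rho> \<alpha>)" and x': "x' \<in> car L"
            and e: "\<rho> \<beta> x' = restrict z A \<beta>"
          define m where "m = max (Nf \<alpha>) (Nf \<beta>)"
          have "\<rho> \<beta> x' = \<rho> \<beta> (xs m)" using e b rxs[OF b, of m] unfolding z_def m_def by simp
          then have "\<rho> \<alpha> x' = \<rho> \<alpha> (xs m)" using Ktrans[OF a b K x' xsc] by blast
          then show "\<rho> \<alpha> x' = restrict z A \<alpha>" using a rxs[OF a, of m] unfolding z_def m_def by simp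
        qed
        then obtain x where x: "x \<in> lgr L p" "\<And>\<alpha>. \<alpha> \<in> A \<Longrightarrow> \<rho> \<alpha> x = z \<alpha>" using lift by force
        have "coset x (Wn n) = c n" for n
        proof -
          have "x - xs n \<in> Wn n"
          proof (rule Wcl)
            show "x - xs n \<in> lgr L p" using V.subspace_diff[OF sub_gr x(1)] xs by blast
            show "\<forall>\<alpha>\<in>A. \<rho> \<alpha> (x - xs n) \<in> lcs (M \<alpha>) n"
            proof
              fix \<alpha> assume a: "\<alpha> \<in> A"
              interpret H: ghom L "M \<alpha>" "\<rho> \<alpha>" by (rule Mhom[OF a])
              define m where "m = max n (Nf \<alpha>)"
              have "\<rho> \<alpha> x = \<rho> \<alpha> (xs m)" using x(2)[OF a] rxs[OF a, of m] unfolding z_def m_def by simp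
              moreover have "x \<in> car L" using x(1) gr_car by blast
              ultimately have "\<rho> \<alpha> (x - xs n) = \<rho> \<alpha> (xs m - xs n)"
                using H.f_diff[OF _ xsc] H.f_diff[OF xsc xsc] by simp
              moreover have "xs m - xs n \<in> lcs L n" using xsd[of n m] unfolding Wn_def m_def by simp
              ultimately show "\<rho> \<alpha> (x - xs n) \<in> lcs (M \<alpha>) n" using H.f_lcs by blast
            qed
          qed
          then show ?thesis using cW xs by simp
        qed
        then have "c = (\<lambda>n. coset x (Wn n))" by auto
        then show "c \<in> (\<lambda>x n. coset x (Wn n)) ` lgr L p" using x(1) by blast
      qed
    qed
  qed
qed

end

theorem proposition3p1:
  fixes L :: "('a::ab_group_add) glie"
    and A :: "'i set"
    and M :: "'i \<Rightarrow> ('b::ab_group_add) glie"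
    and \<rho> :: "'i \<Rightarrow> 'a \<Rightarrow> 'b"
  assumes "complete_enriched L A M \<rho>"
    and "\<forall>p. fin_dim_quot (lsc L) (lgr L p) (lcs_closure L A \<rho> 2 \<inter> lgr L p)"
  shows "(\<forall>p k. \<exists>\<alpha>\<in>A. \<exists>f.
            bij_betw f (quot (lgr L p) (lcs_closure L A \<rho> k \<inter> lgr L p))
                       (quot (lgr (M \<alpha>) p) (lcs (M \<alpha>) k \<inter> lgr (M \<alpha>) p)) \<and>
            (\<forall>x\<in>lgr L p. f (coset x (lcs_closure L A \<rho> k \<inter> lgr L p))
                          = coset (\<rho> \<alpha> x) (lcs (M \<alpha>) k \<inter> lgr (M \<alpha>) p)))
       \<and> (\<forall>k\<ge>1. lcs L k = lcs_closure L A \<rho> k)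
       \<and> pronilpotent L"
proof -
  have g: "graded_lie L" using assms(1) unfolding complete_enriched_def by (elim conjE) assumption
  interpret C: ce2 L A M \<rho>
  proof (intro ce2.intro ce.intro gl.intro ce2_axioms.intro ce_axioms.intro)
    show "graded_lie L" by (rule g)
    show "complete_enriched L A M \<rho>" by (rule assms(1))
    show "\<forall>p. fin_dim_quot (lsc L) (lgr L p) (lcs_closure L A \<rho> 2 \<inter> lgr L p)" by (rule assms(2))
  qed
  show ?thesis using C.thm_i C.thm_ii C.pronil by blast
qed


end
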